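(* Let $f$ be $L$-smooth, bounded below by $f^*$, with unbiased stochastic gradients of variance at most $\sigma^2$ (see context). Consider Cycle SGD with $n$ workers and group size $s$ (see context) and its main branch $\{x^k\}_{k\ge0}$. With step size $\gamma=\min\{\frac{s}{4n^2L},\frac{\varepsilon}{4\sigma^2L}\}$ and $\Delta=f(x^0)-f^*$, we have $\frac1K\sum_{k=0}^{K-1}\mathbb{E}[\|\nabla f(x^k)\|^2]\le\varepsilon$ for all $K\ge\frac{8n^2L\Delta}{s\varepsilon}+\frac{8\sigma^2L\Delta}{\varepsilon^2}$.
   Context: Assumptions: $f:\mathbb{R}^d\to\mathbb{R}$ differentiable with $L$-Lipschitz gradient; $f\ge f^*$; stochastic gradients $\nabla f(x;\xi)$, $\xi\sim\mathcal{D}_\xi$, unbiased with variance at most $\sigma^2$. Cycle SGD: workers are partitioned into groups $G_1=\{1,\dots,s\},G_2=\{s+1,\dots,2s\},\dots,G_{\lceil n/s\rceil}=\{(\lceil n/s\rceil-1)s+1,\dots,n\}$. Initially every worker $i$ has $z^0_i=w^0$, $M_i=0$, and the server model is $w^0$, $r=0$. The method repeats forever: for $g=1,\dots,\lceil n/s\rceil$: every worker $i\in[n]$ performs one local step $z^{M_i+1}_i=z^{M_i}_i-\gamma\nabla f(z^{M_i}_i;\eta^{M_i}_i)$ with fresh i.i.d. $\eta^{M_i}_i\sim\mathcal{D}_\xi$ and increments $M_i$; then the server sets $w^{r+1}=w^r-\gamma\sum_{i\in G_g}\sum_{j=0}^{M_i-1}\nabla f(z^j_i;\eta^j_i)$,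 each worker $i\in G_g$ resets $z^0_i=w^{r+1}$, $M_i=0$, and $r\leftarrow r+1$. Main branch: $x^0=w^0$, and at each server update the gradients sent by the group are applied one at a time to the current head of the branch (workers of the group in increasing index, each worker's gradients in order $j=0,\dots,M_i-1$), so the head after the $r$-th update equals $w^r$. *)

theory Defs
  imports "HOL-Probability.Probability"
begin

text \<open>Workers are indexed 0-based: worker i (i < n) is worker i+1 of the paper.
  Group number (0-based) k consists of the workers i < n with i div s = k, i.e. paper group
  G_(k+1).\<close>

definition num_groups :: "nat \<Rightarrow> nat \<Rightarrow> nat" where
  "num_groups n s = nat \<lceil>real n / real s\<rceil>"

text \<open>Worker i belongs to the group that is served in inner iteration t (t = 0,1,2,...,
  the t-th server update overall; group index cycles t mod ceiling(n/s)).\<close>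
definition in_group :: "nat \<Rightarrow> nat \<Rightarrow> nat \<Rightarrow> nat \<Rightarrow> bool" where
  "in_group n s t i \<longleftrightarrow> i < n \<and> i div s = t mod num_groups n s"

text \<open>State after t server updates (for a fixed realisation omega of the sample sequence):
  (per worker: current local iterate z^(M_i)_i and the list of stochastic gradients
   computed since its last reset, in order j = 0..M_i-1;
   the server model w^t;
   the list of all gradients applied to the main branch so far, in application order).
  In iteration t, worker i uses the sample omega (t * n + i); these indices are pairwise
  distinct, so under the product measure the samples are fresh i.i.d.\<close>
fun cyc_state :: "real \<Rightarrow> ('a::real_normed_vector \<Rightarrow> 'b \<Rightarrow> 'a) \<Rightarrow> nat \<Rightarrow> nat \<Rightarrow> 'a
    \<Rightarrow> (nat \<Rightarrow> 'b) \<Rightarrow> nat \<Rightarrow> (nat \<Rightarrow> 'a \<times> 'a list) \<times> 'a \<times> 'a list" where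
  "cyc_state \<gamma> G n s w0 \<omega> 0 = ((\<lambda>i. (w0, [])), w0, [])"
| "cyc_state \<gamma> G n s w0 \<omega> (Suc t) =
     (let (Z, w, app) = cyc_state \<gamma> G n s w0 \<omega> t;
          Z1 = (\<lambda>i. let (z, gs) = Z i; g = G z (\<omega> (t * n + i))
                     in (z - \<gamma> *\<^sub>R g, gs @ [g]));
          sent = concat (map (\<lambda>i. snd (Z1 i)) (filter (in_group n s t) [0..<n]));
          w' = w - \<gamma> *\<^sub>R sum_list sent;
          Z2 = (\<lambda>i. if in_group n s t i then (w', []) else Z1 i)
      in (Z2, w', app @ sent))"

text \<open>After k+1 server updates at
  least k+1 gradients have been applied (each group is nonempty and each of its workers
  sends at least one gradient), and the applied list only grows by appending.\<close>
definition cyc_grad_seq :: "real \<Rightarrow> ('a::real_normed_vector \<Rightarrow> 'b \<Rightarrow> 'a) \<Rightarrow> nat \<Rightarrow> nat \<Rightarrow> 'a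
    \<Rightarrow> (nat \<Rightarrow> 'b) \<Rightarrow> nat \<Rightarrow> 'a" where
  "cyc_grad_seq \<gamma> G n s w0 \<omega> k = snd (snd (cyc_state \<gamma> G n s w0 \<omega> (Suc k))) ! k"

fun main_branch :: "real \<Rightarrow> ('a::real_normed_vector \<Rightarrow> 'b \<Rightarrow> 'a) \<Rightarrow> nat \<Rightarrow> nat \<Rightarrow> 'a
    \<Rightarrow> (nat \<Rightarrow> 'b) \<Rightarrow> nat \<Rightarrow> 'a" where
  "main_branch \<gamma> G n s w0 \<omega> 0 = w0"
| "main_branch \<gamma> G n s w0 \<omega> (Suc k) =
     main_branch \<gamma> G n s w0 \<omega> k - \<gamma> *\<^sub>R cyc_grad_seq \<gamma> G n s w0 \<omega> k"

text \<open>Step size gamma = min{s/(4 n^2 L), eps/(4 sigma^2 L)}, with the usual convention that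
  the second term is +infinity when sigma = 0.\<close>
definition cycle_stepsize :: "nat \<Rightarrow> nat \<Rightarrow> real \<Rightarrow> real \<Rightarrow> real \<Rightarrow> real" where
  "cycle_stepsize n s L \<sigma> \<epsilon> =
     (if \<sigma>\<^sup>2 = 0 then real s / (4 * real n ^ 2 * L)
      else min (real s / (4 * real n ^ 2 * L)) (\<epsilon> / (4 * \<sigma>\<^sup>2 * L)))"

end

theory Submission
  imports Defs
begin

fun mk :: "nat \<Rightarrow> (nat \<Rightarrow> nat \<times> nat list) \<Rightarrow> nat list \<Rightarrow> (nat \<times> nat \<times> nat) list" where
  "mk p W [] = []"
| "mk p W (i # is) = map (\<lambda>m. (fst (W i), p, m)) (snd (W i)) @ mk (p + length (snd (W i))) W is"

fun ctag :: "nat \<Rightarrow> nat \<Rightarrow> nat \<Rightarrow> (nat \<Rightarrow> nat \<times> nat list) \<times> (nat \<times> nat \<times> nat) list" where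
  "ctag n s 0 = ((\<lambda>i. (0, [])), [])"
| "ctag n s (Suc t) = (let (W, A) = ctag n s t;
     W1 = (\<lambda>i. (fst (W i), snd (W i) @ [t*n+i]));
     sent = mk (length A) W1 (filter (in_group n s t) [0..<n])
   in ((\<lambda>i. if in_group n s t i then (length A + length sent, []) else W1 i), A @ sent))"

lemma ctag_step:
  assumes "ctag n s t = (W, A)"
  shows "ctag n s (Suc t) = (let W1 = (\<lambda>i. (fst (W i), snd (W i) @ [t*n+i]));
     sent = mk (length A) W1 (filter (in_group n s t) [0..<n])
   in ((\<lambda>i. if in_group n s t i then (length A + length sent, []) else W1 i), A @ sent))"
  using assms by (simp add: Let_def)

lemma cyc_step:
  assumes "cyc_state \<gamma> G n s w0 \<omega> t = (Z, w, app)"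
  shows "cyc_state \<gamma> G n s w0 \<omega> (Suc t) =
    (let Z1 = (\<lambda>i. (fst (Z i) - \<gamma> *\<^sub>R G (fst (Z i)) (\<omega> (t * n + i)), snd (Z i) @ [G (fst (Z i)) (\<omega> (t * n + i))]));
         sent = concat (map (\<lambda>i. snd (Z1 i)) (filter (in_group n s t) [0..<n]))
     in ((\<lambda>i. if in_group n s t i then (w - \<gamma> *\<^sub>R sum_list sent, []) else Z1 i),
         w - \<gamma> *\<^sub>R sum_list sent, app @ sent))"
  apply (subst cyc_state.simps(2)) unfolding assms apply (simp only: prod.case Let_def) unfolding case_prod_unfold by simp

lemma length_mk: "length (mk p W L) = sum_list (map (\<lambda>i. length (snd (W i))) L)"
  by (induction L arbitrary: p) auto

lemma map_mk: "map (\<lambda>x. snd (snd x)) (mk p W L) = concat (map (\<lambda>i. snd (W i)) L)"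
  by (induction L arbitrary: p) (auto simp: comp_def)

lemma mk_concat:
  assumes "\<forall>i\<in>set L. length (h i) = length (snd (W i))"
    and "q < length (concat (map h L))"
  shows "\<exists>i j off L1 L2. L = L1 @ i # L2 \<and> j < length (h i) \<and> q = off + j
     \<and> off = sum_list (map (\<lambda>w. length (h w)) L1)
     \<and> concat (map h L) ! q = h i ! j
     \<and> take q (concat (map h L)) = take off (concat (map h L)) @ take j (h i)
     \<and> mk p W L ! q = (fst (W i), p + off, snd (W i) ! j)"
  using assms
proof (induction L arbitrary: p q)
  case Nil
  then show ?case by simp
next
  case (Cons i L)
  show ?case
  proof (cases "q < length (h i)")
    case True
    have "mk p W (i # L) ! q = (fst (W i), p, snd (W i) ! q)"
      using True Cons.prems(1) by (simp add: nth_append)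
    moreover have "concat (map h (i # L)) ! q = h i ! q" using True by (simp add: nth_append)
    moreover have "take q (concat (map h (i # L))) = take 0 (concat (map h (i # L))) @ take q (h i)"
      using True by simp
    ultimately show ?thesis using True
      by (intro exI[of _ i] exI[of _ q] exI[of _ 0] exI[of _ "[]"] exI[of _ L]) auto
  next
    case False
    define q' where "q' = q - length (h i)"
    have q': "q' < length (concat (map h L))" using Cons.prems False by (simp add: q'_def)
    from Cons.IH[of q' "p + length (snd (W i))"] q' Cons.prems(1)
    obtain i' j off L1 L2 where H: "L = L1 @ i' # L2" "j < length (h i')" "q' = off + j"
      "off = sum_list (map (\<lambda>w. length (h w)) L1)"
      "concat (map h L) ! q' = h i' ! j"
      "take q' (concat (map h L)) = take off (concat (map h L)) @ take j (h i')"
      "mk (p + length (snd (W i))) W L ! q' = (fst (W i'), p + length (snd (W i)) + off, snd (W i') ! j)"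
      by auto
    have li: "length (h i) = length (snd (W i))" using Cons.prems(1) by simp
    have qq: "q = length (h i) + q'" using False q'_def by simp
    show ?thesis
    proof (rule exI[of _ i'], rule exI[of _ j], rule exI[of _ "length (h i) + off"], rule exI[of _ "i # L1"], rule exI[of _ L2], intro conjI)
      show "i # L = (i # L1) @ i' # L2" using H by simp
      show "j < length (h i')" by fact
      show "q = length (h i) + off + j" using qq H by simp
      show "length (h i) + off = sum_list (map (\<lambda>w. length (h w)) (i # L1))" using H by simp
      show "concat (map h (i # L)) ! q = h i' ! j" using H qq by (simp add: nth_append)
      show "take q (concat (map h (i # L))) = take (length (h i) + off) (concat (map h (i # L))) @ take j (h i')"
        using H qq by simp
      show "mk p W (i # L) ! q = (fst (W i'), p + (length (h i) + off), snd (W i') ! j)"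
        using H qq li by (simp add: nth_append add.assoc)
    qed
  qed
qed

lemma ng_pos: assumes "1 \<le> n" "1 \<le> s" shows "0 < num_groups n s"
proof -
  have "real n / real s > 0" using assms by simp
  then have "\<lceil>real n / real s\<rceil> > 0" by simp
  then show ?thesis unfolding num_groups_def by simp
qed

lemma ng_bounds: assumes "1 \<le> s"
  shows "num_groups n s * s < n + s" "n \<le> num_groups n s * s"
proof -
  have "real n / real s \<ge> 0" by simp
  then have c0: "\<lceil>real n / real s\<rceil> \<ge> 0" by (subst zero_le_ceiling) linarith
  have c1: "real_of_int \<lceil>real n / real s\<rceil> < real n / real s + 1" by linarith
  have c2: "real n / real s \<le> real_of_int \<lceil>real n / real s\<rceil>" by simp
  have e: "real (num_groups n s) = real_of_int \<lceil>real n / real s\<rceil>"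
    unfolding num_groups_def using c0 by simp
  have sp: "real s > 0" using assms by simp
  have "real (num_groups n s) * real s < (real n / real s + 1) * real s"
    using c1 e sp by (simp add: mult_strict_right_mono)
  also have "\<dots> = real n + real s" using sp by (simp add: field_simps)
  finally have "real (num_groups n s * s) < real (n + s)" by simp
  then show "num_groups n s * s < n + s" by linarith
  have "real n = real n / real s * real s" using sp by simp
  also have "\<dots> \<le> real (num_groups n s) * real s" using c2 e sp by (intro mult_right_mono) auto
  finally have "real n \<le> real (num_groups n s * s)" by simp
  then show "n \<le> num_groups n s * s" by linarith
qed

lemma group_nonempty:
  assumes "1 \<le> n" "1 \<le> s"
  shows "in_group n s t ((t mod num_groups n s) * s)"
proof -
  let ?g = "num_groups n s"
  have g: "0 < ?g" using ng_pos assms by simp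
  have "t mod ?g < ?g" using g by simp
  then have "t mod ?g \<le> ?g - 1" by linarith
  then have "(t mod ?g) * s \<le> (?g - 1) * s" by simp
  also have "\<dots> = ?g * s - s" by (simp add: diff_mult_distrib)
  also have "\<dots> < n" using ng_bounds(1)[OF assms(2), of n] assms by linarith
  finally show ?thesis unfolding in_group_def using assms by simp
qed

lemma filter_group_nonempty:
  assumes "1 \<le> n" "1 \<le> s"
  shows "filter (in_group n s t) [0..<n] \<noteq> []"
proof -
  have "(t mod num_groups n s) * s \<in> set (filter (in_group n s t) [0..<n])"
    using group_nonempty[OF assms, of t] by (simp add: in_group_def)
  then show ?thesis by (metis empty_iff list.set(1))
qed

lemma in_group_lt: "in_group n s t i \<Longrightarrow> i < n" by (simp add: in_group_def)

lemma window_hit: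
  fixes a g r :: nat
  assumes g: "0 < g" and r: "r < g"
  shows "\<exists>\<tau>. a \<le> \<tau> \<and> \<tau> < a + g \<and> \<tau> mod g = r"
proof (cases "a mod g \<le> r")
  case True
  let ?t = "a - a mod g + r"
  have "a - a mod g = g * (a div g)" by (simp add: minus_mod_eq_mult_div)
  then have "?t mod g = r" using r by simp
  moreover have "a \<le> ?t" using True by simp
  moreover have "?t < a + g" using r True mod_less_eq_dividend[of a g] by linarith
  ultimately show ?thesis by blast
next
  case False
  let ?t = "a - a mod g + g + r"
  have "a - a mod g = g * (a div g)" by (simp add: minus_mod_eq_mult_div)
  then have "?t = r + g * (a div g + 1)" by simp
  then have "?t mod g = r mod g" by (simp only: mod_mult_self2)
  then have "?t mod g = r" using r by simp
  moreover have "a \<le> ?t" using mod_less_divisor[OF g, of a] by simp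
  moreover have "?t < a + g" using False mod_less_eq_dividend[of a g] by linarith
  ultimately show ?thesis by blast
qed

lemma mod_close:
  fixes t \<tau> g :: nat
  assumes "\<tau> < t" "t < \<tau> + g" "\<tau> mod g = t mod g"
  shows False
proof -
  have "g dvd t - \<tau>" using assms mod_eq_dvd_iff_nat[of \<tau> t g] by simp
  moreover have "0 < t - \<tau>" "t - \<tau> < g" using assms by auto
  ultimately show False using nat_dvd_not_less by blast
qed

lemma distinct_concat_map:
  assumes "distinct L" "\<And>i. i \<in> set L \<Longrightarrow> distinct (f i)"
    "\<And>i j. i \<in> set L \<Longrightarrow> j \<in> set L \<Longrightarrow> i \<noteq> j \<Longrightarrow> set (f i) \<inter> set (f j) = {}"
  shows "distinct (concat (map f L))"
  using assms
proof (induction L)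
  case Nil then show ?case by simp
next
  case (Cons a L)
  have "distinct (concat (map f L))" using Cons by auto
  moreover have "set (f a) \<inter> set (concat (map f L)) = {}"
  proof -
    have "\<And>j. j \<in> set L \<Longrightarrow> set (f a) \<inter> set (f j) = {}" using Cons.prems by auto
    then show ?thesis by auto
  qed
  ultimately show ?case using Cons.prems by simp
qed

definition Sw :: "nat \<Rightarrow> nat \<Rightarrow> nat \<Rightarrow> nat \<Rightarrow> nat set" where
  "Sw n s t l = {w. w < n \<and> (\<exists>\<tau>. t - l \<le> \<tau> \<and> \<tau> < t \<and> in_group n s \<tau> w)}"

definition mt :: "nat \<times> nat \<times> nat \<Rightarrow> nat" where "mt x = snd (snd x)"

definition TInv :: "nat \<Rightarrow> nat \<Rightarrow> nat \<Rightarrow> (nat \<Rightarrow> nat \<times> nat list) \<Rightarrow> (nat \<times> nat \<times> nat) list \<Rightarrow> bool" where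
  "TInv n s t W A \<longleftrightarrow>
   (\<forall>k<length A. fst (A!k) \<le> fst (snd (A!k)) \<and> fst (snd (A!k)) \<le> k
       \<and> k - fst (A!k) < num_groups n s * n)
   \<and> (\<forall>i<n. fst (W i) \<le> length A \<and> length (snd (W i)) \<le> t \<and> length (snd (W i)) < num_groups n s
       \<and> (\<forall>\<tau>. t - length (snd (W i)) \<le> \<tau> \<and> \<tau> < t \<longrightarrow> \<not> in_group n s \<tau> i)
       \<and> length A - fst (W i) \<le> num_groups n s * card (Sw n s t (length (snd (W i)))))
   \<and> distinct (map mt A)
   \<and> (\<forall>i<n. distinct (snd (W i)) \<and> (\<forall>m\<in>set (snd (W i)). m mod n = i \<and> m < t * n \<and> m \<notin> set (map mt A)))
   \<and> (\<forall>m\<in>set (map mt A). m < t * n)"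

lemma Sw_fin: "finite (Sw n s t l)" "Sw n s t l \<subseteq> {..<n}"
  unfolding Sw_def by auto

lemma TInv_0: "1 \<le> n \<Longrightarrow> 1 \<le> s \<Longrightarrow> TInv n s 0 (\<lambda>i. (0, [])) []"
  unfolding TInv_def using ng_pos by auto

lemma set_L: "set (filter (in_group n s t) [0..<n]) = {w. in_group n s t w}"
  by (auto simp: in_group_def)

lemma TInv_step:
  assumes n: "1 \<le> n" and s: "1 \<le> s" and I: "TInv n s t W A"
  defines "W1 \<equiv> (\<lambda>i. (fst (W i), snd (W i) @ [t*n+i]))"
  defines "L \<equiv> filter (in_group n s t) [0..<n]"
  defines "sent \<equiv> mk (length A) W1 L"
  shows "TInv n s (Suc t) (\<lambda>i. if in_group n s t i then (length A + length sent, []) else W1 i) (A @ sent)"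
proof -
  let ?g = "num_groups n s"
  let ?W2 = "(\<lambda>i. if in_group n s t i then (length A + length sent, []) else W1 i)"
  have g0: "0 < ?g" using ng_pos n s by simp
  have gs: "n \<le> ?g * s" using ng_bounds(2)[OF s] by simp
  have Igrad: "\<forall>k<length A. fst (A!k) \<le> fst (snd (A!k)) \<and> fst (snd (A!k)) \<le> k
       \<and> k - fst (A!k) < ?g * n" using I unfolding TInv_def by blast
  have Iw: "\<And>i. i < n \<Longrightarrow> fst (W i) \<le> length A \<and> length (snd (W i)) \<le> t \<and> length (snd (W i)) < ?g
       \<and> (\<forall>\<tau>. t - length (snd (W i)) \<le> \<tau> \<and> \<tau> < t \<longrightarrow> \<not> in_group n s \<tau> i)
       \<and> length A - fst (W i) \<le> ?g * card (Sw n s t (length (snd (W i))))"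
    using I unfolding TInv_def by blast
  have Id: "distinct (map mt A)" using I unfolding TInv_def by blast
  have Ip: "\<And>i. i < n \<Longrightarrow> distinct (snd (W i)) \<and> (\<forall>m\<in>set (snd (W i)). m mod n = i \<and> m < t * n \<and> m \<notin> set (map mt A))"
    using I unfolding TInv_def by blast
  have Ia: "\<forall>m\<in>set (map mt A). m < t * n" using I unfolding TInv_def by blast
  have setL: "set L = {w. in_group n s t w}" unfolding L_def by (rule set_L)
  have distL: "distinct L" unfolding L_def by simp
  have lenW1: "\<And>w. length (snd (W1 w)) = Suc (length (snd (W w)))" unfolding W1_def by simp
  have lensent: "length sent = sum_list (map (\<lambda>i. length (snd (W1 i))) L)"
    unfolding sent_def by (rule length_mk)
  have lenLe: "\<And>L'. set L' \<subseteq> set L \<Longrightarrow> sum_list (map (\<lambda>i. length (snd (W1 i))) L') \<le> ?g * length L'"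
  proof -
    fix L' assume "set L' \<subseteq> set L"
    then show "sum_list (map (\<lambda>i. length (snd (W1 i))) L') \<le> ?g * length L'"
    proof (induction L')
      case Nil then show ?case by simp
    next
      case (Cons a L')
      have "a < n" using Cons.prems setL in_group_lt by auto
      then have "length (snd (W1 a)) \<le> ?g" using Iw[of a] lenW1[of a] by simp
      then show ?case using Cons by simp
    qed
  qed
  have sent_le: "length sent \<le> ?g * length L" using lensent lenLe[of L] by simp
  have cardL: "card (set L) = length L" using distL by (simp add: distinct_card)
  have PA: "\<forall>k<length (A @ sent). fst ((A @ sent)!k) \<le> fst (snd ((A @ sent)!k)) \<and> fst (snd ((A @ sent)!k)) \<le> k
       \<and> k - fst ((A @ sent)!k) < ?g * n"
  proof (intro allI impI)
    fix k assume k: "k < length (A @ sent)"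
    show "fst ((A @ sent)!k) \<le> fst (snd ((A @ sent)!k)) \<and> fst (snd ((A @ sent)!k)) \<le> k
       \<and> k - fst ((A @ sent)!k) < ?g * n"
    proof (cases "k < length A")
      case True
      then show ?thesis using Igrad by (simp add: nth_append)
    next
      case False
      define q where "q = k - length A"
      have kq: "k = length A + q" using False q_def by simp
      have q: "q < length (concat (map (\<lambda>i. snd (W1 i)) L))"
        using k kq lensent by (simp add: length_concat comp_def)
      from mk_concat[of L "\<lambda>i. snd (W1 i)" W1 q "length A", OF _ q]
      obtain i j off L1 L2 where H: "L = L1 @ i # L2" "j < length (snd (W1 i))" "q = off + j"
        "off = sum_list (map (\<lambda>w. length (snd (W1 w))) L1)"
        "mk (length A) W1 L ! q = (fst (W1 i), length A + off, snd (W1 i) ! j)"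
        by auto
      have iL: "i \<in> set L" using H(1) by simp
      then have ig: "in_group n s t i" and "i < n" using setL in_group_lt by auto
      have ent: "(A @ sent) ! k = (fst (W i), length A + off, snd (W1 i) ! j)"
        using H(5) kq unfolding sent_def by (simp add: nth_append W1_def)
      have a1: "fst (W i) \<le> length A" using Iw[OF \<open>i < n\<close>] by simp
      have L1sub: "set L1 \<subseteq> set L" using H(1) by auto
      have offle: "off \<le> ?g * length L1" using H(4) lenLe[OF L1sub] by simp
      have distL1: "distinct L1" using distL H(1) by simp
      have disj: "Sw n s t (length (snd (W i))) \<inter> set L1 = {}"
      proof (rule ccontr)
        assume "Sw n s t (length (snd (W i))) \<inter> set L1 \<noteq> {}"
        then obtain w where w: "w \<in> Sw n s t (length (snd (W i)))" "w \<in> set L1" by blast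
        from w(1) obtain \<tau> where tau: "t - length (snd (W i)) \<le> \<tau>" "\<tau> < t" "in_group n s \<tau> w"
          unfolding Sw_def by blast
        have "in_group n s t w" using w(2) L1sub setL by auto
        then have "in_group n s \<tau> i" using tau(3) ig unfolding in_group_def by simp
        then show False using Iw[OF \<open>i < n\<close>] tau by blast
      qed
      have iSw: "i \<notin> Sw n s t (length (snd (W i)))"
        using Iw[OF \<open>i < n\<close>] unfolding Sw_def by blast
      have iL1: "i \<notin> set L1" using distL H(1) by simp
      have "card (Sw n s t (length (snd (W i)))) + card (set L1) + 1 = card (insert i (Sw n s t (length (snd (W i))) \<union> set L1))"
        using disj Sw_fin iSw iL1 by (simp add: card_Un_disjoint)
      also have "\<dots> \<le> card {..<n}"
        using Sw_fin L1sub setL in_group_lt \<open>i < n\<close> by (intro card_mono) auto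
      finally have cs: "card (Sw n s t (length (snd (W i)))) + length L1 + 1 \<le> n"
        using distL1 by (simp add: distinct_card)
      have jg: "j < ?g" using H(2) Iw[OF \<open>i < n\<close>] lenW1[of i] by simp
      have "k - fst (W i) < ?g * card (Sw n s t (length (snd (W i)))) + ?g * length L1 + ?g"
        using Iw[OF \<open>i < n\<close>] offle a1 kq H(3) jg by linarith
      also have "\<dots> = ?g * (card (Sw n s t (length (snd (W i)))) + length L1 + 1)" by (simp add: add_mult_distrib2)
      also have "\<dots> \<le> ?g * n" using cs by (rule mult_le_mono2)
      finally show ?thesis using ent a1 kq H(3) by simp
    qed
  qed
  have PB: "\<forall>i<n. fst (?W2 i) \<le> length (A @ sent) \<and> length (snd (?W2 i)) \<le> Suc t \<and> length (snd (?W2 i)) < ?g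
       \<and> (\<forall>\<tau>. Suc t - length (snd (?W2 i)) \<le> \<tau> \<and> \<tau> < Suc t \<longrightarrow> \<not> in_group n s \<tau> i)
       \<and> length (A @ sent) - fst (?W2 i) \<le> ?g * card (Sw n s (Suc t) (length (snd (?W2 i))))"
  proof (intro allI impI)
    fix i assume i: "i < n"
    show "fst (?W2 i) \<le> length (A @ sent) \<and> length (snd (?W2 i)) \<le> Suc t \<and> length (snd (?W2 i)) < ?g
       \<and> (\<forall>\<tau>. Suc t - length (snd (?W2 i)) \<le> \<tau> \<and> \<tau> < Suc t \<longrightarrow> \<not> in_group n s \<tau> i)
       \<and> length (A @ sent) - fst (?W2 i) \<le> ?g * card (Sw n s (Suc t) (length (snd (?W2 i))))"
    proof (cases "in_group n s t i")
      case True
      then show ?thesis using g0 by auto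
    next
      case False
      let ?l = "length (snd (W i))"
      have W2i: "?W2 i = (fst (W i), snd (W i) @ [t*n+i])" using False unfolding W1_def by simp
      have win: "\<forall>\<tau>. t - ?l \<le> \<tau> \<and> \<tau> < Suc t \<longrightarrow> \<not> in_group n s \<tau> i"
      proof (intro allI impI)
        fix \<tau> assume tau: "t - ?l \<le> \<tau> \<and> \<tau> < Suc t"
        show "\<not> in_group n s \<tau> i"
        proof (cases "\<tau> < t")
          case True then show ?thesis using Iw[OF i] tau by blast
        next
          case False then have "\<tau> = t" using tau by simp
          then show ?thesis using \<open>\<not> in_group n s t i\<close> by simp
        qed
      qed
      have lt: "?l \<le> t" using Iw[OF i] by simp
      have lg: "Suc ?l < ?g"
      proof (rule ccontr)
        assume "\<not> Suc ?l < ?g"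
        have "i < ?g * s" using i gs by linarith
        then have r: "i div s < ?g" using s by (simp add: div_less_iff_less_mult)
        obtain \<tau> where tau: "t - ?l \<le> \<tau>" "\<tau> < t - ?l + ?g" "\<tau> mod ?g = i div s"
          using window_hit[OF g0 r] by blast
        have "\<tau> < Suc t" using tau(2) \<open>\<not> Suc ?l < ?g\<close> lt by linarith
        moreover have "in_group n s \<tau> i" using tau(3) i unfolding in_group_def by simp
        ultimately show False using win tau(1) by blast
      qed
      have Sw_eq: "Sw n s (Suc t) (Suc ?l) = Sw n s t ?l \<union> set L"
      proof -
        have "Suc t - Suc ?l = t - ?l" by simp
        show ?thesis
        proof (intro equalityI subsetI)
          fix w assume "w \<in> Sw n s (Suc t) (Suc ?l)"
          then obtain \<tau> where tau: "w < n" "t - ?l \<le> \<tau>" "\<tau> < Suc t" "in_group n s \<tau> w"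
            unfolding Sw_def by auto
          show "w \<in> Sw n s t ?l \<union> set L"
          proof (cases "\<tau> < t")
            case True then show ?thesis using tau unfolding Sw_def by blast
          next
            case False then have "\<tau> = t" using tau by simp
            then show ?thesis using tau setL by blast
          qed
        next
          fix w assume w: "w \<in> Sw n s t ?l \<union> set L"
          show "w \<in> Sw n s (Suc t) (Suc ?l)"
          proof (cases "w \<in> set L")
            case True
            then have "in_group n s t w" "w < n" using setL in_group_lt by auto
            moreover have "t - ?l \<le> t" by simp
            ultimately show ?thesis unfolding Sw_def by (auto intro!: exI[of _ t])
          next
            case False
            then obtain \<tau> where "w < n" "t - ?l \<le> \<tau>" "\<tau> < t" "in_group n s \<tau> w"
              using w unfolding Sw_def by auto
            then show ?thesis unfolding Sw_def by (auto intro!: exI[of _ \<tau>])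
          qed
        qed
      qed
      have disj: "Sw n s t ?l \<inter> set L = {}"
      proof (rule ccontr)
        assume "Sw n s t ?l \<inter> set L \<noteq> {}"
        then obtain w where w: "w \<in> Sw n s t ?l" "w \<in> set L" by blast
        from w(1) obtain \<tau> where tau: "t - ?l \<le> \<tau>" "\<tau> < t" "in_group n s \<tau> w"
          unfolding Sw_def by blast
        have "in_group n s t w" using w(2) setL by auto
        then have "\<tau> mod ?g = t mod ?g" using tau(3) unfolding in_group_def by simp
        moreover have "t < \<tau> + ?g" using tau(1) lg by linarith
        ultimately show False using mod_close tau(2) by blast
      qed
      have "length (A @ sent) - fst (W i) \<le> ?g * card (Sw n s t ?l) + ?g * length L"
        using Iw[OF i] sent_le by (simp only: length_append) linarith
      also have "\<dots> = ?g * card (Sw n s (Suc t) (Suc ?l))"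
        using Sw_eq disj Sw_fin cardL by (simp add: card_Un_disjoint add_mult_distrib2)
      finally show ?thesis using W2i Iw[OF i] win lg lt by auto
    qed
  qed
  have msent: "map mt sent = concat (map (\<lambda>i. snd (W1 i)) L)"
    unfolding sent_def mt_def by (rule map_mk)
  have W1p: "\<And>i. i < n \<Longrightarrow> distinct (snd (W1 i)) \<and> (\<forall>m\<in>set (snd (W1 i)). m mod n = i \<and> m < Suc t * n \<and> m \<notin> set (map mt A))"
  proof -
    fix i assume i: "i < n"
    have "t * n + i \<notin> set (snd (W i))" using Ip[OF i] by auto
    moreover have "t * n + i \<notin> set (map mt A)" using Ia by auto
    moreover have "(t * n + i) mod n = i" using i by simp
    moreover have "t * n + i < Suc t * n" using i by simp
    moreover have "\<forall>m\<in>set (snd (W i)). m < Suc t * n" using Ip[OF i] by auto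
    ultimately show "distinct (snd (W1 i)) \<and> (\<forall>m\<in>set (snd (W1 i)). m mod n = i \<and> m < Suc t * n \<and> m \<notin> set (map mt A))"
      using Ip[OF i] unfolding W1_def by auto
  qed
  have dsent: "distinct (map mt sent)" unfolding msent
  proof (rule distinct_concat_map[OF distL])
    fix i assume "i \<in> set L"
    then have "i < n" using setL in_group_lt by auto
    then show "distinct (snd (W1 i))" using W1p by blast
  next
    fix i j assume ij: "i \<in> set L" "j \<in> set L" "i \<noteq> j"
    then have "i < n" "j < n" using setL in_group_lt by auto
    then have W1i: "\<forall>m\<in>set (snd (W1 i)). m mod n = i" and W1j: "\<forall>m\<in>set (snd (W1 j)). m mod n = j" using W1p by blast+
    then show "set (snd (W1 i)) \<inter> set (snd (W1 j)) = {}"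
    proof (intro equalityI subsetI)
      fix m assume "m \<in> set (snd (W1 i)) \<inter> set (snd (W1 j))"
      then have "m mod n = i" "m mod n = j" using W1i W1j by blast+
      then show "m \<in> {}" using ij(3) by simp
    qed simp
  qed
  have memsent: "\<And>m. m \<in> set (map mt sent) \<Longrightarrow> \<exists>i. in_group n s t i \<and> i < n \<and> m \<in> set (snd (W1 i))"
  proof -
    fix m assume "m \<in> set (map mt sent)"
    then obtain i where "i \<in> set L" "m \<in> set (snd (W1 i))" unfolding msent by auto
    then show "\<exists>i. in_group n s t i \<and> i < n \<and> m \<in> set (snd (W1 i))" using setL in_group_lt by blast
  qed
  have sentA: "set (map mt sent) \<inter> set (map mt A) = {}"
  proof (intro equalityI subsetI)
    fix m assume m: "m \<in> set (map mt sent) \<inter> set (map mt A)"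
    then obtain i where "i < n" "m \<in> set (snd (W1 i))" using memsent by blast
    then have "m \<notin> set (map mt A)" using W1p by blast
    then show "m \<in> {}" using m by blast
  qed simp
  have sentres: "\<forall>m\<in>set (map mt sent). in_group n s t (m mod n)"
  proof
    fix m assume "m \<in> set (map mt sent)"
    then obtain i where "in_group n s t i" "i < n" "m \<in> set (snd (W1 i))" using memsent by blast
    then show "in_group n s t (m mod n)" using W1p by metis
  qed
  have sentlt: "\<forall>m\<in>set (map mt sent). m < Suc t * n"
  proof
    fix m assume "m \<in> set (map mt sent)"
    then obtain i where "i < n" "m \<in> set (snd (W1 i))" using memsent by blast
    then show "m < Suc t * n" using W1p by blast
  qed
  have PC: "distinct (map mt (A @ sent))" using Id dsent sentA by auto
  have PD: "\<forall>i<n. distinct (snd (?W2 i)) \<and> (\<forall>m\<in>set (snd (?W2 i)). m mod n = i \<and> m < Suc t * n \<and> m \<notin> set (map mt (A @ sent)))"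
  proof (intro allI impI)
    fix i assume i: "i < n"
    show "distinct (snd (?W2 i)) \<and> (\<forall>m\<in>set (snd (?W2 i)). m mod n = i \<and> m < Suc t * n \<and> m \<notin> set (map mt (A @ sent)))"
    proof (cases "in_group n s t i")
      case True then show ?thesis by simp
    next
      case False
      have "\<forall>m\<in>set (snd (W1 i)). m \<notin> set (map mt sent)"
      proof (intro ballI notI)
        fix m assume "m \<in> set (snd (W1 i))" "m \<in> set (map mt sent)"
        then have "m mod n = i" "in_group n s t (m mod n)" using W1p[OF i] sentres by blast+
        then show False using False by simp
      qed
      then show ?thesis using False W1p[OF i] by auto
    qed
  qed
  have PE: "\<forall>m\<in>set (map mt (A @ sent)). m < Suc t * n"
    using Ia sentlt by (auto intro: less_le_trans)
  show ?thesis unfolding TInv_def using PA PB PC PD PE by blast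
qed

lemma ctag_TInv:
  assumes n: "1 \<le> n" and s: "1 \<le> s"
  shows "TInv n s t (fst (ctag n s t)) (snd (ctag n s t))"
proof (induction t)
  case 0 then show ?case using TInv_0[OF n s] by simp
next
  case (Suc t)
  obtain W A where WA: "ctag n s t = (W, A)" by (cases "ctag n s t")
  show ?case using TInv_step[OF n s, of t W A] Suc WA unfolding ctag_step[OF WA] Let_def by simp
qed

lemma sum_list_take_nth: "k \<le> length xs \<Longrightarrow> sum_list (take k xs) = (\<Sum>j<k. xs ! j)"
proof (induction k)
  case 0 then show ?case by simp
next
  case (Suc k)
  then have "take (Suc k) xs = take k xs @ [xs ! k]" by (simp add: take_Suc_conv_app_nth)
  then show ?case using Suc by simp
qed

declare cyc_state.simps(2)[simp del] ctag.simps(2)[simp del]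

context
  fixes \<gamma> :: real and G :: "'a::real_normed_vector \<Rightarrow> 'b \<Rightarrow> 'a" and n s :: nat and w0 :: 'a and \<omega> :: "nat \<Rightarrow> 'b"
  assumes n: "1 \<le> n" and s: "1 \<le> s"
begin

abbreviation "app t \<equiv> snd (snd (cyc_state \<gamma> G n s w0 \<omega> t))"
abbreviation "xb \<equiv> main_branch \<gamma> G n s w0 \<omega>"

lemma app_Suc: "\<exists>ys. app (Suc t) = app t @ ys \<and> ys \<noteq> []"
proof -
  obtain Z w A where ZA: "cyc_state \<gamma> G n s w0 \<omega> t = (Z, w, A)" by (cases "cyc_state \<gamma> G n s w0 \<omega> t") auto
  let ?L = "filter (in_group n s t) [0..<n]"
  let ?Z1 = "(\<lambda>i. (fst (Z i) - \<gamma> *\<^sub>R G (fst (Z i)) (\<omega> (t * n + i)), snd (Z i) @ [G (fst (Z i)) (\<omega> (t * n + i))]))"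
  have "?L \<noteq> []" using filter_group_nonempty[OF n s] by simp
  then obtain i L' where "?L = i # L'" by (cases ?L) auto
  then have "concat (map (\<lambda>i. snd (?Z1 i)) ?L) \<noteq> []" by simp
  then show ?thesis unfolding cyc_step[OF ZA] Let_def using ZA by simp
qed

lemma app_prefix: "t \<le> t' \<Longrightarrow> \<exists>ys. app t' = app t @ ys"
proof (induction t' rule: dec_induct)
  case base then show ?case by simp
next
  case (step t')
  then show ?case using app_Suc[of t'] by force
qed

lemma app_len: "t \<le> length (app t)"
proof (induction t)
  case 0 then show ?case by simp
next
  case (Suc t)
  obtain ys where "app (Suc t) = app t @ ys" "ys \<noteq> []" using app_Suc by blast
  then show ?case using Suc by (cases ys) auto
qed

lemma app_nth: "k < length (app t) \<Longrightarrow> t \<le> t' \<Longrightarrow> app t' ! k = app t ! k"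
  using app_prefix[of t t'] by (auto simp: nth_append)

lemma cgs_eq: "k < length (app t) \<Longrightarrow> cyc_grad_seq \<gamma> G n s w0 \<omega> k = app t ! k"
proof -
  assume k: "k < length (app t)"
  have k1: "k < length (app (Suc k))" using app_len[of "Suc k"] by simp
  have "app (max t (Suc k)) ! k = app t ! k" by (rule app_nth[OF k]) simp
  moreover have "app (max t (Suc k)) ! k = app (Suc k) ! k" by (rule app_nth[OF k1]) simp
  ultimately show ?thesis unfolding cyc_grad_seq_def by simp
qed

lemma xb_sum: "xb k = w0 - \<gamma> *\<^sub>R (\<Sum>j<k. cyc_grad_seq \<gamma> G n s w0 \<omega> j)"
  by (induction k) (simp_all add: scaleR_add_right)

lemma xb_take: "k \<le> length (app t) \<Longrightarrow> xb k = w0 - \<gamma> *\<^sub>R sum_list (take k (app t))"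
proof -
  assume k: "k \<le> length (app t)"
  have "(\<Sum>j<k. cyc_grad_seq \<gamma> G n s w0 \<omega> j) = (\<Sum>j<k. app t ! j)"
    using k by (intro sum.cong refl cgs_eq) auto
  then show ?thesis using xb_sum[of k] sum_list_take_nth[OF k] by simp
qed

definition Rel :: "nat \<Rightarrow> bool" where
  "Rel t \<longleftrightarrow> (let Z = fst (cyc_state \<gamma> G n s w0 \<omega> t); w = fst (snd (cyc_state \<gamma> G n s w0 \<omega> t));
                 W = fst (ctag n s t); A = snd (ctag n s t) in
     length (app t) = length A \<and> w = w0 - \<gamma> *\<^sub>R sum_list (app t)
     \<and> (\<forall>k<length A. app t ! k = G (xb k - xb (fst (snd (A!k))) + xb (fst (A!k))) (\<omega> (mt (A!k))))
     \<and> (\<forall>i<n. length (snd (Z i)) = length (snd (W i)) \<and> fst (Z i) = xb (fst (W i)) - \<gamma> *\<^sub>R sum_list (snd (Z i))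
          \<and> (\<forall>j<length (snd (Z i)). snd (Z i) ! j = G (xb (fst (W i)) - \<gamma> *\<^sub>R sum_list (take j (snd (Z i)))) (\<omega> (snd (W i) ! j)))))"

lemma Rel_0: "Rel 0"
  unfolding Rel_def by simp

lemma Rel_step:
  assumes RT: "Rel t"
  shows "Rel (Suc t)"
proof -
  obtain Z w A0 where ZA: "cyc_state \<gamma> G n s w0 \<omega> t = (Z, w, A0)" by (cases "cyc_state \<gamma> G n s w0 \<omega> t") auto
  obtain W A where WA: "ctag n s t = (W, A)" by (cases "ctag n s t") auto
  have TI: "TInv n s t W A" using ctag_TInv[OF n s, of t] WA by simp
  have Wle: "\<And>i. i < n \<Longrightarrow> fst (W i) \<le> length A" using TI unfolding TInv_def by blast
  have R: "length A0 = length A \<and> w = w0 - \<gamma> *\<^sub>R sum_list A0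
     \<and> (\<forall>k<length A. A0 ! k = G (xb k - xb (fst (snd (A!k))) + xb (fst (A!k))) (\<omega> (mt (A!k))))
     \<and> (\<forall>i<n. length (snd (Z i)) = length (snd (W i)) \<and> fst (Z i) = xb (fst (W i)) - \<gamma> *\<^sub>R sum_list (snd (Z i))
          \<and> (\<forall>j<length (snd (Z i)). snd (Z i) ! j = G (xb (fst (W i)) - \<gamma> *\<^sub>R sum_list (take j (snd (Z i)))) (\<omega> (snd (W i) ! j))))"
    using RT unfolding Rel_def Let_def ZA WA by simp
  have R1: "length A0 = length A" using R by blast
  have R2: "w = w0 - \<gamma> *\<^sub>R sum_list A0" using R by blast
  have R3: "\<And>k. k < length A \<Longrightarrow> A0 ! k = G (xb k - xb (fst (snd (A!k))) + xb (fst (A!k))) (\<omega> (mt (A!k)))"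
    using R by blast
  have R4: "\<And>i. i < n \<Longrightarrow> length (snd (Z i)) = length (snd (W i)) \<and> fst (Z i) = xb (fst (W i)) - \<gamma> *\<^sub>R sum_list (snd (Z i))
          \<and> (\<forall>j<length (snd (Z i)). snd (Z i) ! j = G (xb (fst (W i)) - \<gamma> *\<^sub>R sum_list (take j (snd (Z i)))) (\<omega> (snd (W i) ! j)))"
    using R by blast
  define gn where "gn i = G (fst (Z i)) (\<omega> (t * n + i))" for i
  define Z1 where "Z1 i = (fst (Z i) - \<gamma> *\<^sub>R gn i, snd (Z i) @ [gn i])" for i
  define L where "L = filter (in_group n s t) [0..<n]"
  define sent where "sent = concat (map (\<lambda>i. snd (Z1 i)) L)"
  define w' where "w' = w - \<gamma> *\<^sub>R sum_list sent"
  define W1 where "W1 = (\<lambda>i. (fst (W i), snd (W i) @ [t*n+i]))"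
  define sentT where "sentT = mk (length A) W1 L"
  have cs: "cyc_state \<gamma> G n s w0 \<omega> (Suc t) = ((\<lambda>i. if in_group n s t i then (w', []) else Z1 i), w', A0 @ sent)"
    unfolding cyc_step[OF ZA] Let_def w'_def sent_def Z1_def gn_def L_def by simp
  have ct: "ctag n s (Suc t) = ((\<lambda>i. if in_group n s t i then (length A + length sentT, []) else W1 i), A @ sentT)"
    unfolding ctag_step[OF WA] Let_def sentT_def W1_def L_def by simp
  have appS: "app (Suc t) = A0 @ sent" using cs by simp
  have setL: "set L = {w. in_group n s t w}" unfolding L_def by (rule set_L)
  have Ln: "\<And>i. i \<in> set L \<Longrightarrow> i < n" using setL in_group_lt by auto
  have lenZ1: "\<And>i. i \<in> set L \<Longrightarrow> length (snd (Z1 i)) = length (snd (W1 i))"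
    using R4 Ln unfolding Z1_def W1_def by simp
  have lens: "length sent = length sentT"
  proof -
    have "length sent = sum_list (map (\<lambda>i. length (snd (Z1 i))) L)" unfolding sent_def by (simp add: length_concat comp_def)
    also have "\<dots> = sum_list (map (\<lambda>i. length (snd (W1 i))) L)" using lenZ1 by (intro arg_cong[where f=sum_list] map_cong) auto
    finally show ?thesis unfolding sentT_def length_mk .
  qed
  have xbS: "\<And>k. k \<le> length (A0 @ sent) \<Longrightarrow> xb k = w0 - \<gamma> *\<^sub>R sum_list (take k (A0 @ sent))"
    using xb_take[of _ "Suc t"] appS by simp
  have Z1p: "\<And>i. i < n \<Longrightarrow> (\<forall>j<length (snd (Z1 i)). snd (Z1 i) ! j = G (xb (fst (W1 i)) - \<gamma> *\<^sub>R sum_list (take j (snd (Z1 i)))) (\<omega> (snd (W1 i) ! j)))"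
  proof (intro allI impI)
    fix i j assume i: "i < n" and j: "j < length (snd (Z1 i))"
    show "snd (Z1 i) ! j = G (xb (fst (W1 i)) - \<gamma> *\<^sub>R sum_list (take j (snd (Z1 i)))) (\<omega> (snd (W1 i) ! j))"
    proof (cases "j < length (snd (Z i))")
      case True
      then show ?thesis using R4[OF i] unfolding Z1_def W1_def by (simp add: nth_append)
    next
      case False
      then have jj: "j = length (snd (Z i))" using j unfolding Z1_def by simp
      then show ?thesis using R4[OF i] unfolding Z1_def W1_def gn_def by (simp add: nth_append)
    qed
  qed
  have N1: "length (app (Suc t)) = length (snd (ctag n s (Suc t)))"
    using appS ct R1 lens by simp
  have N2: "fst (snd (cyc_state \<gamma> G n s w0 \<omega> (Suc t))) = w0 - \<gamma> *\<^sub>R sum_list (app (Suc t))"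
    using cs R2 unfolding w'_def by (simp add: scaleR_add_right)
  have N3: "\<forall>k<length (A @ sentT). (A0 @ sent) ! k = G (xb k - xb (fst (snd ((A @ sentT)!k))) + xb (fst ((A @ sentT)!k))) (\<omega> (mt ((A @ sentT)!k)))"
  proof (intro allI impI)
    fix k assume k: "k < length (A @ sentT)"
    show "(A0 @ sent) ! k = G (xb k - xb (fst (snd ((A @ sentT)!k))) + xb (fst ((A @ sentT)!k))) (\<omega> (mt ((A @ sentT)!k)))"
    proof (cases "k < length A")
      case True
      then show ?thesis using R3[OF True] R1 by (simp add: nth_append)
    next
      case False
      define q where "q = k - length A"
      have kq: "k = length A + q" using False q_def by simp
      have q: "q < length (concat (map (\<lambda>i. snd (Z1 i)) L))"
        using k kq lens unfolding sent_def by simp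
      from mk_concat[of L "\<lambda>i. snd (Z1 i)" W1 q "length A", OF _ q] lenZ1
      obtain i j off L1 L2 where H: "L = L1 @ i # L2" "j < length (snd (Z1 i))" "q = off + j"
        "concat (map (\<lambda>i. snd (Z1 i)) L) ! q = snd (Z1 i) ! j"
        "take q (concat (map (\<lambda>i. snd (Z1 i)) L)) = take off (concat (map (\<lambda>i. snd (Z1 i)) L)) @ take j (snd (Z1 i))"
        "mk (length A) W1 L ! q = (fst (W1 i), length A + off, snd (W1 i) ! j)"
        by blast
      have i: "i < n" using H(1) Ln by simp
      have tagk: "(A @ sentT) ! k = (fst (W1 i), length A + off, snd (W1 i) ! j)"
        using H(6) kq unfolding sentT_def by (simp add: nth_append)
      have entk: "(A0 @ sent) ! k = snd (Z1 i) ! j"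
        using H(4) kq R1 unfolding sent_def by (simp add: nth_append)
      have lk: "k \<le> length (A0 @ sent)" using k R1 lens by simp
      have lo: "length A + off \<le> length (A0 @ sent)" using lk kq H(3) by simp
      have xk: "xb k = w0 - \<gamma> *\<^sub>R (sum_list A0 + sum_list (take off sent) + sum_list (take j (snd (Z1 i))))"
        using xbS[OF lk] kq R1 H(3,5) unfolding sent_def by (simp add: add.assoc)
      have xo: "xb (length A + off) = w0 - \<gamma> *\<^sub>R (sum_list A0 + sum_list (take off sent))"
        using xbS[OF lo] R1 by simp
      have eq: "xb (fst (W1 i)) - \<gamma> *\<^sub>R sum_list (take j (snd (Z1 i))) = xb k - xb (length A + off) + xb (fst (W1 i))"
        unfolding xk xo by (simp add: scaleR_add_right algebra_simps)
      have e2: "(A0 @ sent) ! k = G (xb (fst (W1 i)) - \<gamma> *\<^sub>R sum_list (take j (snd (Z1 i)))) (\<omega> (snd (W1 i) ! j))"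
        using Z1p[OF i] H(2) entk by simp
      show ?thesis using e2[unfolded eq] tagk by (simp add: mt_def)
    qed
  qed
  have N4: "\<forall>i<n. length (snd (fst (cyc_state \<gamma> G n s w0 \<omega> (Suc t)) i)) = length (snd (fst (ctag n s (Suc t)) i))
     \<and> fst (fst (cyc_state \<gamma> G n s w0 \<omega> (Suc t)) i) = xb (fst (fst (ctag n s (Suc t)) i)) - \<gamma> *\<^sub>R sum_list (snd (fst (cyc_state \<gamma> G n s w0 \<omega> (Suc t)) i))
     \<and> (\<forall>j<length (snd (fst (cyc_state \<gamma> G n s w0 \<omega> (Suc t)) i)). snd (fst (cyc_state \<gamma> G n s w0 \<omega> (Suc t)) i) ! j
          = G (xb (fst (fst (ctag n s (Suc t)) i)) - \<gamma> *\<^sub>R sum_list (take j (snd (fst (cyc_state \<gamma> G n s w0 \<omega> (Suc t)) i)))) (\<omega> (snd (fst (ctag n s (Suc t)) i) ! j)))"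
  proof (intro allI impI)
    fix i assume i: "i < n"
    show "length (snd (fst (cyc_state \<gamma> G n s w0 \<omega> (Suc t)) i)) = length (snd (fst (ctag n s (Suc t)) i))
     \<and> fst (fst (cyc_state \<gamma> G n s w0 \<omega> (Suc t)) i) = xb (fst (fst (ctag n s (Suc t)) i)) - \<gamma> *\<^sub>R sum_list (snd (fst (cyc_state \<gamma> G n s w0 \<omega> (Suc t)) i))
     \<and> (\<forall>j<length (snd (fst (cyc_state \<gamma> G n s w0 \<omega> (Suc t)) i)). snd (fst (cyc_state \<gamma> G n s w0 \<omega> (Suc t)) i) ! j
          = G (xb (fst (fst (ctag n s (Suc t)) i)) - \<gamma> *\<^sub>R sum_list (take j (snd (fst (cyc_state \<gamma> G n s w0 \<omega> (Suc t)) i)))) (\<omega> (snd (fst (ctag n s (Suc t)) i) ! j)))"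
    proof (cases "in_group n s t i")
      case True
      have "w' = xb (length A + length sentT)"
        using xbS[of "length (A0 @ sent)"] R1 R2 lens unfolding w'_def by (simp add: scaleR_add_right)
      then show ?thesis using True cs ct by simp
    next
      case False
      have "fst (Z1 i) = xb (fst (W1 i)) - \<gamma> *\<^sub>R sum_list (snd (Z1 i))"
        using R4[OF i] unfolding Z1_def W1_def by (simp add: scaleR_add_right)
      moreover have "length (snd (Z1 i)) = length (snd (W1 i))" using R4[OF i] unfolding Z1_def W1_def by simp
      ultimately show ?thesis using False cs ct Z1p[OF i] by simp
    qed
  qed
  show ?thesis unfolding Rel_def Let_def using N1 N2 N3 N4 appS ct by simp
qed

lemma Rel_all: "Rel t"
  by (induction t) (auto intro: Rel_0 Rel_step)

lemma Rel_D3: "k < length (snd (ctag n s t)) \<Longrightarrow> app t ! k =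
   G (xb k - xb (fst (snd (snd (ctag n s t) ! k))) + xb (fst (snd (ctag n s t) ! k))) (\<omega> (mt (snd (ctag n s t) ! k)))"
proof -
  assume k: "k < length (snd (ctag n s t))"
  have "\<forall>k<length (snd (ctag n s t)). app t ! k =
   G (xb k - xb (fst (snd (snd (ctag n s t) ! k))) + xb (fst (snd (ctag n s t) ! k))) (\<omega> (mt (snd (ctag n s t) ! k)))"
    using Rel_all[of t] unfolding Rel_def Let_def by (elim conjE) assumption
  then show ?thesis using k by blast
qed

end

lemma ctag_Suc_len:
  assumes n: "1 \<le> n" and s: "1 \<le> s"
  shows "\<exists>ys. snd (ctag n s (Suc t)) = snd (ctag n s t) @ ys \<and> ys \<noteq> []"
proof -
  obtain W A where WA: "ctag n s t = (W, A)" by (cases "ctag n s t") auto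
  define W1 where "W1 = (\<lambda>i. (fst (W i), snd (W i) @ [t*n+i]))"
  define L where "L = filter (in_group n s t) [0..<n]"
  have "L \<noteq> []" using filter_group_nonempty[OF n s] unfolding L_def by simp
  then obtain i L' where "L = i # L'" by (cases L) auto
  then have "mk (length A) W1 L \<noteq> []" unfolding W1_def by simp
  then show ?thesis unfolding ctag_step[OF WA] Let_def using WA unfolding W1_def L_def by simp
qed

lemma ctag_prefix:
  assumes n: "1 \<le> n" and s: "1 \<le> s"
  shows "t \<le> t' \<Longrightarrow> \<exists>ys. snd (ctag n s t') = snd (ctag n s t) @ ys"
proof (induction t' rule: dec_induct)
  case base then show ?case by simp
next
  case (step t')
  then show ?case using ctag_Suc_len[OF n s, of t'] by force
qed

lemma ctag_len:
  assumes n: "1 \<le> n" and s: "1 \<le> s"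
  shows "t \<le> length (snd (ctag n s t))"
proof (induction t)
  case 0 then show ?case by simp
next
  case (Suc t)
  obtain ys where "snd (ctag n s (Suc t)) = snd (ctag n s t) @ ys" "ys \<noteq> []" using ctag_Suc_len[OF n s] by blast
  then show ?case using Suc by (cases ys) auto
qed

lemma TInv_D1: "TInv n s t W A \<Longrightarrow> k < length A \<Longrightarrow> fst (A!k) \<le> fst (snd (A!k)) \<and> fst (snd (A!k)) \<le> k
       \<and> k - fst (A!k) < num_groups n s * n"
  unfolding TInv_def by blast

lemma TInv_D2: "TInv n s t W A \<Longrightarrow> distinct (map mt A)"
  unfolding TInv_def by blast

definition aa :: "nat \<Rightarrow> nat \<Rightarrow> nat \<Rightarrow> nat" where "aa n s k = fst (snd (ctag n s (Suc k)) ! k)"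
definition bb :: "nat \<Rightarrow> nat \<Rightarrow> nat \<Rightarrow> nat" where "bb n s k = fst (snd (snd (ctag n s (Suc k)) ! k))"
definition mm :: "nat \<Rightarrow> nat \<Rightarrow> nat \<Rightarrow> nat" where "mm n s k = mt (snd (ctag n s (Suc k)) ! k)"

lemma tag_props:
  assumes n: "1 \<le> n" and s: "1 \<le> s"
  shows "aa n s k \<le> bb n s k" "bb n s k \<le> k" "k - aa n s k < num_groups n s * n"
proof -
  have k: "k < length (snd (ctag n s (Suc k)))" using ctag_len[OF n s, of "Suc k"] by simp
  have "TInv n s (Suc k) (fst (ctag n s (Suc k))) (snd (ctag n s (Suc k)))" by (rule ctag_TInv[OF n s])
  from TInv_D1[OF this k]
  show "aa n s k \<le> bb n s k" "bb n s k \<le> k" "k - aa n s k < num_groups n s * n"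
    unfolding aa_def bb_def by simp_all
qed

lemma mm_inj:
  assumes n: "1 \<le> n" and s: "1 \<le> s" and jk: "j < k"
  shows "mm n s j \<noteq> mm n s k"
proof -
  let ?A = "snd (ctag n s (Suc k))"
  have k: "k < length ?A" using ctag_len[OF n s, of "Suc k"] by simp
  have j1: "j < length (snd (ctag n s (Suc j)))" using ctag_len[OF n s, of "Suc j"] by simp
  obtain ys where ys: "?A = snd (ctag n s (Suc j)) @ ys" using ctag_prefix[OF n s, of "Suc j" "Suc k"] jk by auto
  have ej: "snd (ctag n s (Suc j)) ! j = ?A ! j" using ys j1 by (simp add: nth_append)
  have "TInv n s (Suc k) (fst (ctag n s (Suc k))) ?A" by (rule ctag_TInv[OF n s])
  then have d: "distinct (map mt ?A)" by (rule TInv_D2)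
  from d have "\<forall>i<length (map mt ?A). \<forall>j<length (map mt ?A). i \<noteq> j \<longrightarrow> map mt ?A ! i \<noteq> map mt ?A ! j"
    by (simp only: distinct_conv_nth)
  then have "map mt ?A ! j \<noteq> map mt ?A ! k" using jk k by simp
  then show ?thesis unfolding mm_def ej using jk k by simp
qed

lemma mb_rec:
  fixes \<gamma> :: real and G :: "'a::real_normed_vector \<Rightarrow> 'b \<Rightarrow> 'a" and w0 :: 'a and \<omega> :: "nat \<Rightarrow> 'b"
  assumes n: "1 \<le> n" and s: "1 \<le> s"
  shows "main_branch \<gamma> G n s w0 \<omega> (Suc k) = main_branch \<gamma> G n s w0 \<omega> k - \<gamma> *\<^sub>R
     G (main_branch \<gamma> G n s w0 \<omega> k - main_branch \<gamma> G n s w0 \<omega> (bb n s k) + main_branch \<gamma> G n s w0 \<omega> (aa n s k)) (\<omega> (mm n s k))"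
proof -
  have k: "k < length (snd (ctag n s (Suc k)))" using ctag_len[OF n s, of "Suc k"] by simp
  have "cyc_grad_seq \<gamma> G n s w0 \<omega> k = G (main_branch \<gamma> G n s w0 \<omega> k - main_branch \<gamma> G n s w0 \<omega> (bb n s k) + main_branch \<gamma> G n s w0 \<omega> (aa n s k)) (\<omega> (mm n s k))"
    unfolding cyc_grad_seq_def aa_def bb_def mm_def by (rule Rel_D3[OF n s k])
  then show ?thesis by simp
qed

lemma descent:
  fixes f :: "'a::real_inner \<Rightarrow> real" and gf :: "'a \<Rightarrow> 'a"
  assumes grad: "\<And>x. (f has_derivative (\<lambda>h. gf x \<bullet> h)) (at x)"
    and lip: "\<And>x y. norm (gf x - gf y) \<le> L * norm (x - y)"
  shows "f y \<le> f x + gf x \<bullet> (y - x) + L / 2 * (norm (y - x))\<^sup>2"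
proof -
  define h where "h = y - x"
  define \<psi> where "\<psi> t = f (x + t *\<^sub>R h) - t * (gf x \<bullet> h) - L / 2 * t\<^sup>2 * (norm h)\<^sup>2" for t :: real
  have D: "DERIV \<psi> t :> (gf (x + t *\<^sub>R h) \<bullet> h - gf x \<bullet> h - L * t * (norm h)\<^sup>2)" for t
  proof -
    have d1: "((\<lambda>t. x + t *\<^sub>R h) has_derivative (\<lambda>dt. dt *\<^sub>R h)) (at t)"
      by (auto intro!: derivative_eq_intros)
    have d2: "((\<lambda>t. f (x + t *\<^sub>R h)) has_derivative (\<lambda>dt. gf (x + t *\<^sub>R h) \<bullet> (dt *\<^sub>R h))) (at t)"
      using has_derivative_compose[OF d1 grad] by simp
    have d3: "DERIV (\<lambda>t. f (x + t *\<^sub>R h)) t :> gf (x + t *\<^sub>R h) \<bullet> h"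
      by (rule has_derivative_imp_has_field_derivative[OF d2]) (simp add: mult.commute)
    have d4: "DERIV (\<lambda>t. t * (gf x \<bullet> h)) t :> gf x \<bullet> h"
      by (auto intro!: derivative_eq_intros)
    have d5: "DERIV (\<lambda>t. L / 2 * t\<^sup>2 * (norm h)\<^sup>2) t :> L * t * (norm h)\<^sup>2"
      by (auto intro!: derivative_eq_intros)
    show ?thesis unfolding \<psi>_def using DERIV_diff[OF DERIV_diff[OF d3 d4] d5] by simp
  qed
  have nonpos: "gf (x + t *\<^sub>R h) \<bullet> h - gf x \<bullet> h - L * t * (norm h)\<^sup>2 \<le> 0" if t: "0 \<le> t" for t
  proof -
    have "gf (x + t *\<^sub>R h) \<bullet> h - gf x \<bullet> h = (gf (x + t *\<^sub>R h) - gf x) \<bullet> h" by (simp add: inner_diff_left)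
    also have "\<dots> \<le> norm (gf (x + t *\<^sub>R h) - gf x) * norm h" by (rule norm_cauchy_schwarz)
    also have "\<dots> \<le> L * norm (t *\<^sub>R h) * norm h"
      using lip[of "x + t *\<^sub>R h" x] by (simp add: mult_right_mono)
    also have "\<dots> = L * t * (norm h)\<^sup>2" using t by (simp add: power2_eq_square)
    finally show ?thesis by simp
  qed
  have "\<psi> 1 \<le> \<psi> 0"
  proof (rule DERIV_nonpos_imp_nonincreasing[of 0 1 \<psi>])
    fix t :: real assume "0 \<le> t" "t \<le> 1"
    then show "\<exists>y. DERIV \<psi> t :> y \<and> y \<le> 0" using D[of t] nonpos[of t] by blast
  qed simp
  then show ?thesis unfolding \<psi>_def h_def by simp
qed

lemma L_nonneg:
  fixes gf :: "'a::euclidean_space \<Rightarrow> 'a"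
  assumes lip: "\<And>x y. norm (gf x - gf y) \<le> L * norm (x - y)"
  shows "0 \<le> L"
proof (rule ccontr)
  assume "\<not> 0 \<le> L"
  obtain b :: 'a where "b \<in> Basis" using nonempty_Basis by blast
  then have "norm b > 0" by (simp add: norm_Basis)
  then have "L * norm (b - 0) < 0" using \<open>\<not> 0 \<le> L\<close> by (simp add: mult_neg_pos)
  then show False using lip[of b 0] norm_ge_zero[of "gf b - gf 0"] by linarith
qed

lemma grad_bound:
  fixes f :: "'a::real_inner \<Rightarrow> real" and gf :: "'a \<Rightarrow> 'a"
  assumes grad: "\<And>x. (f has_derivative (\<lambda>h. gf x \<bullet> h)) (at x)"
    and lip: "\<And>x y. norm (gf x - gf y) \<le> L * norm (x - y)"
    and lower: "\<And>x. fstar \<le> f x" and L: "0 < L"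
  shows "(norm (gf x))\<^sup>2 \<le> 2 * L * (f x - fstar)"
proof -
  let ?y = "x - (1 / L) *\<^sub>R gf x"
  have "fstar \<le> f ?y" by (rule lower)
  also have "\<dots> \<le> f x + gf x \<bullet> (?y - x) + L / 2 * (norm (?y - x))\<^sup>2" by (rule descent[OF grad lip])
  also have "\<dots> = f x - (norm (gf x))\<^sup>2 / (2 * L)"
    using L by (simp add: power2_norm_eq_inner power2_eq_square field_simps inner_commute flip: power2_norm_eq_inner)
  finally have "(norm (gf x))\<^sup>2 / (2 * L) \<le> f x - fstar" by simp
  then show ?thesis using L by (simp add: field_simps)
qed

lemma quad_form:
  fixes x y :: "'a::real_inner"
  assumes ed: "d < e" and c: "c = e - (e - 1/2)\<^sup>2 / (e - d)"
  shows "- (x \<bullet> y) \<le> - c * (norm x)\<^sup>2 - d * (norm y)\<^sup>2 + e * (norm (x - y))\<^sup>2"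
proof -
  define \<beta> where "\<beta> = e - d"
  define \<kappa> where "\<kappa> = 1/2 - e"
  have b: "\<beta> > 0" using ed by (simp add: \<beta>_def)
  have "0 \<le> (1/\<beta>) * ((\<beta> *\<^sub>R y + \<kappa> *\<^sub>R x) \<bullet> (\<beta> *\<^sub>R y + \<kappa> *\<^sub>R x))" using b by simp
  also have "\<dots> = \<beta> * (y \<bullet> y) + 2 * \<kappa> * (x \<bullet> y) + \<kappa>\<^sup>2 / \<beta> * (x \<bullet> x)"
    using b by (simp add: inner_add_left inner_add_right inner_commute field_simps power2_eq_square)
  also have "\<dots> = (- c * (norm x)\<^sup>2 - d * (norm y)\<^sup>2 + e * (norm (x - y))\<^sup>2) - (- (x \<bullet> y))"
    unfolding c \<beta>_def \<kappa>_def power2_norm_eq_inner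
    by (simp add: inner_diff_left inner_diff_right inner_commute field_simps power2_eq_square)
  finally show ?thesis by simp
qed

lemma norm_sum_sq:
  fixes u :: "nat \<Rightarrow> 'a::real_normed_vector"
  shows "(norm (\<Sum>i\<in>I. u i))\<^sup>2 \<le> real (card I) * (\<Sum>i\<in>I. (norm (u i))\<^sup>2)"
proof (cases "finite I")
  case True
  have "norm (\<Sum>i\<in>I. u i) \<le> (\<Sum>i\<in>I. norm (u i))" by (rule norm_sum)
  then have "(norm (\<Sum>i\<in>I. u i))\<^sup>2 \<le> (\<Sum>i\<in>I. norm (u i))\<^sup>2" by (simp add: power_mono)
  also have "\<dots> = (\<Sum>i\<in>I. 1 * norm (u i))\<^sup>2" by simp
  also have "\<dots> \<le> (\<Sum>i\<in>I. 1\<^sup>2) * (\<Sum>i\<in>I. (norm (u i))\<^sup>2)"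
    by (rule Cauchy_Schwarz_ineq_sum)
  finally show ?thesis by simp
next
  case False then show ?thesis by simp
qed

lemma norm_add_sq: "(norm (p + q :: 'a::real_inner))\<^sup>2 \<le> 2 * (norm p)\<^sup>2 + 2 * (norm q)\<^sup>2"
proof -
  have "0 \<le> (norm (p - q))\<^sup>2" by simp
  then show ?thesis unfolding power2_norm_eq_inner
    by (simp add: inner_add_left inner_add_right inner_diff_left inner_diff_right inner_commute)
qed

lemma resample:
  fixes D :: "'b measure"
  assumes D: "prob_space D" and h: "h \<in> borel_measurable (PiM UNIV (\<lambda>_::nat. D))"
  shows "(\<integral>\<^sup>+\<omega>. h \<omega> \<partial>PiM UNIV (\<lambda>_. D)) = (\<integral>\<^sup>+\<omega>. (\<integral>\<^sup>+\<xi>. h (fun_upd \<omega> m \<xi>) \<partial>D) \<partial>PiM UNIV (\<lambda>_. D))"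
proof -
  let ?P = "PiM UNIV (\<lambda>_::nat. D)"
  interpret PD: prob_space D by (rule D)
  interpret PP: prob_space ?P by (rule prob_space_PiM) (simp add: D)
  interpret pair_prob_space D ?P by unfold_locales
  have eq: "distr (D \<Otimes>\<^sub>M ?P) ?P (\<lambda>(x, X). X(m := x)) = ?P"
    using distr_pair_PiM_eq_PiM[of UNIV "\<lambda>_. D" m] D by simp
  have mf0: "(\<lambda>p. (snd p)(m := fst p)) \<in> measurable (D \<Otimes>\<^sub>M ?P) ?P"
    by (rule measurable_fun_upd[of UNIV UNIV m]) auto
  have mf: "(\<lambda>(x, X). X(m := x)) \<in> measurable (D \<Otimes>\<^sub>M ?P) ?P"
    using mf0 by (simp add: case_prod_beta')
  have "(\<integral>\<^sup>+\<omega>. h \<omega> \<partial>?P) = (\<integral>\<^sup>+\<omega>. h \<omega> \<partial>distr (D \<Otimes>\<^sub>M ?P) ?P (\<lambda>(x, X). X(m := x)))"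
    by (simp only: eq)
  also have "\<dots> = (\<integral>\<^sup>+p. h ((\<lambda>(x, X). X(m := x)) p) \<partial>(D \<Otimes>\<^sub>M ?P))"
    by (rule nn_integral_distr[OF mf]) (use h in simp)
  also have "\<dots> = (\<integral>\<^sup>+X. (\<integral>\<^sup>+x. h (fun_upd X m x) \<partial>D) \<partial>?P)"
  proof -
    have hm: "(\<lambda>p. h ((\<lambda>(x, X). X(m := x)) p)) \<in> borel_measurable (D \<Otimes>\<^sub>M ?P)"
      using measurable_comp[OF mf h] by (simp add: comp_def)
    show ?thesis using nn_integral_snd[OF hm] by simp
  qed
  finally show ?thesis .
qed

context
  fixes gf :: "'a::euclidean_space \<Rightarrow> 'a" and G :: "'a \<Rightarrow> 'b \<Rightarrow> 'a" and D :: "'b measure" and \<sigma> :: real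
  assumes D: "prob_space D"
    and meas: "(\<lambda>(x, \<xi>). G x \<xi>) \<in> borel_measurable (borel \<Otimes>\<^sub>M D)"
    and unbiased: "\<And>x. integrable D (G x) \<and> (\<integral>\<xi>. G x \<xi> \<partial>D) = gf x"
    and var: "\<And>x. integrable D (\<lambda>\<xi>. (norm (G x \<xi> - gf x))\<^sup>2) \<and> (\<integral>\<xi>. (norm (G x \<xi> - gf x))\<^sup>2 \<partial>D) \<le> \<sigma>\<^sup>2"
begin

interpretation PD: prob_space D by (rule D)

lemma G_meas: "(\<lambda>\<xi>. G z \<xi>) \<in> borel_measurable D"
  using measurable_Pair2[OF meas, of z] by simp

lemma N_int: "integrable D (\<lambda>\<xi>. G z \<xi> - gf z)" "(\<integral>\<xi>. (G z \<xi> - gf z) \<partial>D) = 0"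
proof -
  show "integrable D (\<lambda>\<xi>. G z \<xi> - gf z)" using unbiased[of z] by auto
  have "(\<integral>\<xi>. (G z \<xi> - gf z) \<partial>D) = (\<integral>\<xi>. G z \<xi> \<partial>D) - (\<integral>\<xi>. gf z \<partial>D)"
    using unbiased[of z] by (intro Bochner_Integration.integral_diff) auto
  then show "(\<integral>\<xi>. (G z \<xi> - gf z) \<partial>D) = 0" using unbiased[of z] PD.prob_space by simp
qed

lemma R2:
  "integrable D (\<lambda>\<xi>. (norm (S + (G z \<xi> - gf z)))\<^sup>2) \<and>
   (\<integral>\<xi>. (norm (S + (G z \<xi> - gf z)))\<^sup>2 \<partial>D) = (norm S)\<^sup>2 + (\<integral>\<xi>. (norm (G z \<xi> - gf z))\<^sup>2 \<partial>D)"
proof -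
  let ?N = "\<lambda>\<xi>. G z \<xi> - gf z"
  have e: "(norm (S + ?N \<xi>))\<^sup>2 = (norm S)\<^sup>2 + 2 * (S \<bullet> ?N \<xi>) + (norm (?N \<xi>))\<^sup>2" for \<xi>
    unfolding power2_norm_eq_inner by (simp add: inner_add_left inner_add_right inner_commute)
  have i1: "integrable D (\<lambda>\<xi>. S \<bullet> ?N \<xi>)" using N_int(1) by (rule integrable_inner_right)
  have i2: "integrable D (\<lambda>\<xi>. (norm (?N \<xi>))\<^sup>2)" using var[of z] by blast
  have i3: "integrable D (\<lambda>\<xi>. (norm S)\<^sup>2 + 2 * (S \<bullet> ?N \<xi>) + (norm (?N \<xi>))\<^sup>2)"
    using i1 i2 by (intro Bochner_Integration.integrable_add integrable_mult_right) auto
  have "(\<integral>\<xi>. (norm S)\<^sup>2 + 2 * (S \<bullet> ?N \<xi>) + (norm (?N \<xi>))\<^sup>2 \<partial>D)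
      = (\<integral>\<xi>. (norm S)\<^sup>2 + 2 * (S \<bullet> ?N \<xi>) \<partial>D) + (\<integral>\<xi>. (norm (?N \<xi>))\<^sup>2 \<partial>D)"
    using i1 i2 by (intro Bochner_Integration.integral_add Bochner_Integration.integrable_add integrable_mult_right) auto
  also have "(\<integral>\<xi>. (norm S)\<^sup>2 + 2 * (S \<bullet> ?N \<xi>) \<partial>D) = (\<integral>\<xi>. (norm S)\<^sup>2 \<partial>D) + (\<integral>\<xi>. 2 * (S \<bullet> ?N \<xi>) \<partial>D)"
    using i1 by (intro Bochner_Integration.integral_add integrable_mult_right) auto
  also have "(\<integral>\<xi>. 2 * (S \<bullet> ?N \<xi>) \<partial>D) = 2 * (S \<bullet> (\<integral>\<xi>. ?N \<xi> \<partial>D))"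
    using N_int(1) by simp
  also have "(\<integral>\<xi>. (norm S)\<^sup>2 \<partial>D) = (norm S)\<^sup>2" using PD.prob_space by simp
  finally show ?thesis using i3 N_int(2) unfolding e by simp
qed

lemma F1: "(\<integral>\<^sup>+\<xi>. ennreal ((norm (G z \<xi> - gf z))\<^sup>2) \<partial>D) = ennreal (\<integral>\<xi>. (norm (G z \<xi> - gf z))\<^sup>2 \<partial>D)"
  using var[of z] by (intro nn_integral_eq_integral) auto

lemma F1le: "(\<integral>\<^sup>+\<xi>. ennreal ((norm (G z \<xi> - gf z))\<^sup>2) \<partial>D) \<le> ennreal (\<sigma>\<^sup>2)"
  unfolding F1 using var[of z] by (simp add: ennreal_leI)

lemma F2: "(\<integral>\<^sup>+\<xi>. ennreal ((norm (S + (G z \<xi> - gf z)))\<^sup>2) \<partial>D)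
    = ennreal ((norm S)\<^sup>2) + (\<integral>\<^sup>+\<xi>. ennreal ((norm (G z \<xi> - gf z))\<^sup>2) \<partial>D)"
proof -
  have "(\<integral>\<^sup>+\<xi>. ennreal ((norm (S + (G z \<xi> - gf z)))\<^sup>2) \<partial>D) = ennreal (\<integral>\<xi>. (norm (S + (G z \<xi> - gf z)))\<^sup>2 \<partial>D)"
    using R2[of S z] by (intro nn_integral_eq_integral) auto
  also have "\<dots> = ennreal ((norm S)\<^sup>2) + ennreal (\<integral>\<xi>. (norm (G z \<xi> - gf z))\<^sup>2 \<partial>D)"
    using R2[of S z] by (simp add: ennreal_plus integral_nonneg_AE)
  finally show ?thesis unfolding F1 .
qed

end

context
  fixes f :: "'a::euclidean_space \<Rightarrow> real" and gf :: "'a \<Rightarrow> 'a" and G :: "'a \<Rightarrow> 'b \<Rightarrow> 'a" and D :: "'b measure"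
    and \<sigma> L fstar :: real
  assumes grad: "\<And>x. (f has_derivative (\<lambda>h. gf x \<bullet> h)) (at x)"
    and lip: "\<And>x y. norm (gf x - gf y) \<le> L * norm (x - y)"
    and lower: "\<And>x. fstar \<le> f x"
    and D: "prob_space D"
    and meas: "(\<lambda>(x, \<xi>). G x \<xi>) \<in> borel_measurable (borel \<Otimes>\<^sub>M D)"
    and unbiased: "\<And>x. integrable D (G x) \<and> (\<integral>\<xi>. G x \<xi> \<partial>D) = gf x"
    and var: "\<And>x. integrable D (\<lambda>\<xi>. (norm (G x \<xi> - gf x))\<^sup>2) \<and> (\<integral>\<xi>. (norm (G x \<xi> - gf x))\<^sup>2 \<partial>D) \<le> \<sigma>\<^sup>2"
begin

interpretation PD: prob_space D by (rule D)

lemma F4: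
  assumes g: "0 \<le> \<gamma>" and c0: "0 \<le> c" and d0: "0 \<le> d" and ed: "d < e"
    and c: "c = e - (e - 1/2)\<^sup>2 / (e - d)"
  shows "(\<integral>\<^sup>+\<xi>. ennreal (f (x - \<gamma> *\<^sub>R G z \<xi>) - fstar) \<partial>D)
           + ennreal (\<gamma> * c * (norm (gf x))\<^sup>2 + \<gamma> * d * (norm (gf z))\<^sup>2)
         \<le> ennreal (f x - fstar + \<gamma> * e * (norm (gf x - gf z))\<^sup>2 + L * \<gamma>\<^sup>2 / 2 * ((norm (gf z))\<^sup>2 + \<sigma>\<^sup>2))"
proof -
  have L0: "0 \<le> L" using L_nonneg[OF lip] .
  let ?N = "\<lambda>\<xi>. G z \<xi> - gf z"
  define h where "h \<xi> = f x - fstar - \<gamma> * (gf x \<bullet> G z \<xi>) + L * \<gamma>\<^sup>2 / 2 * (norm (gf z + ?N \<xi>))\<^sup>2" for \<xi>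
  have pw: "f (x - \<gamma> *\<^sub>R G z \<xi>) - fstar \<le> h \<xi>" for \<xi>
  proof -
    have "f (x - \<gamma> *\<^sub>R G z \<xi>) \<le> f x + gf x \<bullet> ((x - \<gamma> *\<^sub>R G z \<xi>) - x) + L / 2 * (norm ((x - \<gamma> *\<^sub>R G z \<xi>) - x))\<^sup>2"
      by (rule descent[OF grad lip])
    also have "\<dots> = f x - \<gamma> * (gf x \<bullet> G z \<xi>) + L * \<gamma>\<^sup>2 / 2 * (norm (G z \<xi>))\<^sup>2"
      using g by (simp add: power_mult_distrib)
    finally show ?thesis unfolding h_def by simp
  qed
  have hnn: "0 \<le> h \<xi>" for \<xi> using pw[of \<xi>] lower[of "x - \<gamma> *\<^sub>R G z \<xi>"] by linarith
  have i1: "integrable D (\<lambda>\<xi>. gf x \<bullet> G z \<xi>)" using unbiased[of z] by (intro integrable_inner_right) auto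
  have R: "integrable D (\<lambda>\<xi>. (norm (gf z + ?N \<xi>))\<^sup>2) \<and>
     (\<integral>\<xi>. (norm (gf z + ?N \<xi>))\<^sup>2 \<partial>D) = (norm (gf z))\<^sup>2 + (\<integral>\<xi>. (norm (?N \<xi>))\<^sup>2 \<partial>D)"
    by (rule R2[OF D meas unbiased var])
  have ih: "integrable D h" unfolding h_def using i1 R
    by (intro Bochner_Integration.integrable_add Bochner_Integration.integrable_diff integrable_mult_right) auto
  have "(\<integral>\<xi>. h \<xi> \<partial>D) = (\<integral>\<xi>. f x - fstar - \<gamma> * (gf x \<bullet> G z \<xi>) \<partial>D) + (\<integral>\<xi>. L * \<gamma>\<^sup>2 / 2 * (norm (gf z + ?N \<xi>))\<^sup>2 \<partial>D)"
    unfolding h_def using i1 R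
    by (intro Bochner_Integration.integral_add Bochner_Integration.integrable_diff integrable_mult_right) auto
  also have "(\<integral>\<xi>. f x - fstar - \<gamma> * (gf x \<bullet> G z \<xi>) \<partial>D) = (\<integral>\<xi>. f x - fstar \<partial>D) - (\<integral>\<xi>. \<gamma> * (gf x \<bullet> G z \<xi>) \<partial>D)"
    using i1 by (intro Bochner_Integration.integral_diff integrable_mult_right) auto
  also have "(\<integral>\<xi>. f x - fstar \<partial>D) = f x - fstar" using PD.prob_space by simp
  also have "(\<integral>\<xi>. \<gamma> * (gf x \<bullet> G z \<xi>) \<partial>D) = \<gamma> * (gf x \<bullet> gf z)" using unbiased[of z] by simp
  also have "(\<integral>\<xi>. L * \<gamma>\<^sup>2 / 2 * (norm (gf z + ?N \<xi>))\<^sup>2 \<partial>D) = L * \<gamma>\<^sup>2 / 2 * ((norm (gf z))\<^sup>2 + (\<integral>\<xi>. (norm (?N \<xi>))\<^sup>2 \<partial>D))"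
    using R by simp
  finally have Ih: "(\<integral>\<xi>. h \<xi> \<partial>D) = f x - fstar - \<gamma> * (gf x \<bullet> gf z) + L * \<gamma>\<^sup>2 / 2 * ((norm (gf z))\<^sup>2 + (\<integral>\<xi>. (norm (?N \<xi>))\<^sup>2 \<partial>D))" .
  have vle: "(\<integral>\<xi>. (norm (?N \<xi>))\<^sup>2 \<partial>D) \<le> \<sigma>\<^sup>2" using var[of z] by blast
  have q: "- (gf x \<bullet> gf z) \<le> - c * (norm (gf x))\<^sup>2 - d * (norm (gf z))\<^sup>2 + e * (norm (gf x - gf z))\<^sup>2"
    by (rule quad_form[OF ed c])
  have L2: "0 \<le> L * \<gamma>\<^sup>2 / 2" using L0 by simp
  have key: "(\<integral>\<xi>. h \<xi> \<partial>D) + (\<gamma> * c * (norm (gf x))\<^sup>2 + \<gamma> * d * (norm (gf z))\<^sup>2)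
      \<le> f x - fstar + \<gamma> * e * (norm (gf x - gf z))\<^sup>2 + L * \<gamma>\<^sup>2 / 2 * ((norm (gf z))\<^sup>2 + \<sigma>\<^sup>2)"
  proof -
    have "\<gamma> * (- (gf x \<bullet> gf z)) \<le> \<gamma> * (- c * (norm (gf x))\<^sup>2 - d * (norm (gf z))\<^sup>2 + e * (norm (gf x - gf z))\<^sup>2)"
      using q g by (rule mult_left_mono)
    moreover have "L * \<gamma>\<^sup>2 / 2 * ((norm (gf z))\<^sup>2 + (\<integral>\<xi>. (norm (?N \<xi>))\<^sup>2 \<partial>D)) \<le> L * \<gamma>\<^sup>2 / 2 * ((norm (gf z))\<^sup>2 + \<sigma>\<^sup>2)"
      using vle L2 by (intro mult_left_mono) auto
    ultimately show ?thesis unfolding Ih by (simp add: algebra_simps)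
  qed
  have "(\<integral>\<^sup>+\<xi>. ennreal (f (x - \<gamma> *\<^sub>R G z \<xi>) - fstar) \<partial>D) \<le> (\<integral>\<^sup>+\<xi>. ennreal (h \<xi>) \<partial>D)"
    using pw by (intro nn_integral_mono) (simp add: ennreal_leI)
  also have "\<dots> = ennreal (\<integral>\<xi>. h \<xi> \<partial>D)" using ih hnn by (intro nn_integral_eq_integral) auto
  finally have A1: "(\<integral>\<^sup>+\<xi>. ennreal (f (x - \<gamma> *\<^sub>R G z \<xi>) - fstar) \<partial>D) \<le> ennreal (\<integral>\<xi>. h \<xi> \<partial>D)" .
  have Bnn: "0 \<le> \<gamma> * c * (norm (gf x))\<^sup>2 + \<gamma> * d * (norm (gf z))\<^sup>2" using g c0 d0 by simp
  have Inn: "0 \<le> (\<integral>\<xi>. h \<xi> \<partial>D)" using hnn by (simp add: integral_nonneg_AE)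
  have "(\<integral>\<^sup>+\<xi>. ennreal (f (x - \<gamma> *\<^sub>R G z \<xi>) - fstar) \<partial>D) + ennreal (\<gamma> * c * (norm (gf x))\<^sup>2 + \<gamma> * d * (norm (gf z))\<^sup>2)
     \<le> ennreal (\<integral>\<xi>. h \<xi> \<partial>D) + ennreal (\<gamma> * c * (norm (gf x))\<^sup>2 + \<gamma> * d * (norm (gf z))\<^sup>2)"
    using A1 by (rule add_right_mono)
  also have "\<dots> = ennreal ((\<integral>\<xi>. h \<xi> \<partial>D) + (\<gamma> * c * (norm (gf x))\<^sup>2 + \<gamma> * d * (norm (gf z))\<^sup>2))"
    using Bnn Inn by (simp add: ennreal_plus)
  also have "\<dots> \<le> ennreal (f x - fstar + \<gamma> * e * (norm (gf x - gf z))\<^sup>2 + L * \<gamma>\<^sup>2 / 2 * ((norm (gf z))\<^sup>2 + \<sigma>\<^sup>2))"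
    using key by (rule ennreal_leI)
  finally show ?thesis .
qed

end

lemma resample_meas:
  fixes D :: "'b measure"
  assumes D: "prob_space D" and h: "h \<in> borel_measurable (PiM UNIV (\<lambda>_::nat. D))"
  shows "(\<lambda>\<omega>. \<integral>\<^sup>+\<xi>. h (fun_upd \<omega> m \<xi>) \<partial>D) \<in> borel_measurable (PiM UNIV (\<lambda>_::nat. D))"
proof -
  let ?P = "PiM UNIV (\<lambda>_::nat. D)"
  interpret PD: prob_space D by (rule D)
  have mf0: "(\<lambda>p. (fst p)(m := snd p)) \<in> measurable (?P \<Otimes>\<^sub>M D) ?P"
    by (rule measurable_fun_upd[of UNIV UNIV m]) auto
  have "(\<lambda>p. h ((fst p)(m := snd p))) \<in> borel_measurable (?P \<Otimes>\<^sub>M D)"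
    using measurable_comp[OF mf0 h] by (simp add: comp_def)
  from PD.borel_measurable_nn_integral_fst[OF this] show ?thesis by simp
qed

locale cyc_setting =
  fixes f :: "'a::euclidean_space \<Rightarrow> real" and gf :: "'a \<Rightarrow> 'a" and G :: "'a \<Rightarrow> 'b \<Rightarrow> 'a" and D :: "'b measure"
    and \<sigma> L fstar \<gamma> :: real and a b idx :: "nat \<Rightarrow> nat" and R :: nat and X :: "nat \<Rightarrow> (nat \<Rightarrow> 'b) \<Rightarrow> 'a"
    and w0 :: 'a
  assumes grad: "\<And>x. (f has_derivative (\<lambda>h. gf x \<bullet> h)) (at x)"
    and lip: "\<And>x y. norm (gf x - gf y) \<le> L * norm (x - y)"
    and lower: "\<And>x. fstar \<le> f x"
    and D: "prob_space D"
    and meas: "(\<lambda>(x, \<xi>). G x \<xi>) \<in> borel_measurable (borel \<Otimes>\<^sub>M D)"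
    and unbiased: "\<And>x. integrable D (G x) \<and> (\<integral>\<xi>. G x \<xi> \<partial>D) = gf x"
    and var: "\<And>x. integrable D (\<lambda>\<xi>. (norm (G x \<xi> - gf x))\<^sup>2) \<and> (\<integral>\<xi>. (norm (G x \<xi> - gf x))\<^sup>2 \<partial>D) \<le> \<sigma>\<^sup>2"
    and gpos: "0 < \<gamma>" and Lpos: "0 < L"
    and ab: "\<And>k. a k \<le> b k" and bk: "\<And>k. b k \<le> k" and abR: "\<And>k. k - a k \<le> R"
    and inj: "\<And>j k. j < k \<Longrightarrow> idx j \<noteq> idx k"
    and X0: "\<And>\<omega>. X 0 \<omega> = w0"
    and XS: "\<And>k \<omega>. X (Suc k) \<omega> = X k \<omega> - \<gamma> *\<^sub>R G (X k \<omega> - X (b k) \<omega> + X (a k) \<omega>) (\<omega> (idx k))"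

sublocale cyc_setting \<subseteq> PD: prob_space D by (rule D)

sublocale cyc_setting \<subseteq> PPi: prob_space "PiM UNIV (\<lambda>_::nat. D)" by (rule prob_space_PiM) (simp add: D)

context cyc_setting
begin

abbreviation "PP \<equiv> PiM UNIV (\<lambda>_::nat. D)"

definition "Zf k \<omega> = X k \<omega> - X (b k) \<omega> + X (a k) \<omega>"
definition "gk k \<omega> = G (Zf k \<omega>) (\<omega> (idx k))"
definition "nz k \<omega> = gk k \<omega> - gf (Zf k \<omega>)"

lemma XS': "X (Suc k) \<omega> = X k \<omega> - \<gamma> *\<^sub>R gk k \<omega>"
  unfolding gk_def Zf_def by (rule XS)

lemma f_borel[measurable]: "f \<in> borel_measurable borel"
proof (rule borel_measurable_continuous_onI)
  have "\<And>x. isCont f x" using grad has_derivative_continuous by blast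
  then show "continuous_on UNIV f" by (simp add: continuous_at_imp_continuous_on)
qed

lemma gf_borel[measurable]: "gf \<in> borel_measurable borel"
proof (rule borel_measurable_continuous_onI)
  have "L-lipschitz_on UNIV gf" unfolding lipschitz_on_def using lip Lpos by (simp add: dist_norm)
  then show "continuous_on UNIV gf" by (rule lipschitz_on_continuous_on)
qed

lemma Gcomp:
  assumes Z: "Z \<in> borel_measurable PP"
  shows "(\<lambda>\<omega>. G (Z \<omega>) (\<omega> m)) \<in> borel_measurable PP"
proof -
  have "(\<lambda>\<omega>. (Z \<omega>, \<omega> m)) \<in> measurable PP (borel \<Otimes>\<^sub>M D)"
    using Z by (intro measurable_Pair measurable_component_singleton) auto
  from measurable_comp[OF this meas] show ?thesis by (simp add: comp_def)
qed

lemma X_meas_all: "\<forall>j\<le>k. X j \<in> borel_measurable PP"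
proof (induction k)
  case 0 then show ?case using X0 by simp
next
  case (Suc k)
  have Zm: "(\<lambda>\<omega>. X k \<omega> - X (b k) \<omega> + X (a k) \<omega>) \<in> borel_measurable PP"
    using Suc ab[of k] bk[of k] by (intro borel_measurable_add borel_measurable_diff) auto
  have "X (Suc k) \<in> borel_measurable PP"
    unfolding XS using Suc Gcomp[OF Zm] by (intro borel_measurable_diff borel_measurable_scaleR) auto
  then show ?case using Suc le_Suc_eq by auto
qed

lemma X_meas[measurable]: "X k \<in> borel_measurable PP"
  using X_meas_all by blast

lemma Zf_meas[measurable]: "Zf k \<in> borel_measurable PP"
  unfolding Zf_def by measurable

lemma gk_meas[measurable]: "gk k \<in> borel_measurable PP"
  unfolding gk_def by (rule Gcomp) simp

lemma nz_meas[measurable]: "nz k \<in> borel_measurable PP"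
  unfolding nz_def by measurable

lemma X_inv_all: "\<forall>\<omega> \<xi> m. (\<forall>j<k. idx j \<noteq> m) \<longrightarrow> X k (fun_upd \<omega> m \<xi>) = X k \<omega>"
proof (induction k rule: less_induct)
  case (less k)
  show ?case
  proof (cases k)
    case 0 then show ?thesis using X0 by simp
  next
    case (Suc k')
    show ?thesis
    proof (intro allI impI)
      fix \<omega> \<xi> m assume H: "\<forall>j<k. idx j \<noteq> m"
      have h1: "\<forall>j<k'. idx j \<noteq> m" "\<forall>j<b k'. idx j \<noteq> m" "\<forall>j<a k'. idx j \<noteq> m"
        using H Suc bk[of k'] ab[of k'] by auto
      have l1: "k' < k" "b k' < k" "a k' < k" using Suc bk[of k'] ab[of k'] by auto
      have i1: "X k' (fun_upd \<omega> m \<xi>) = X k' \<omega>" using less[OF l1(1)] h1(1) by blast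
      have i2: "X (b k') (fun_upd \<omega> m \<xi>) = X (b k') \<omega>" using less[OF l1(2)] h1(2) by blast
      have i3: "X (a k') (fun_upd \<omega> m \<xi>) = X (a k') \<omega>" using less[OF l1(3)] h1(3) by blast
      have i4: "(fun_upd \<omega> m \<xi>) (idx k') = \<omega> (idx k')" using H Suc by auto
      show "X k (fun_upd \<omega> m \<xi>) = X k \<omega>" unfolding Suc XS using i1 i2 i3 i4 by simp
    qed
  qed
qed

lemma X_inv: "i \<le> k \<Longrightarrow> X i (fun_upd \<omega> (idx k) \<xi>) = X i \<omega>"
proof -
  assume ik: "i \<le> k"
  have "\<forall>j<i. idx j \<noteq> idx k" using inj ik by (meson order.strict_trans2)
  then show ?thesis using X_inv_all[of i] by blast
qed

lemma Zf_inv: "i \<le> k \<Longrightarrow> Zf i (fun_upd \<omega> (idx k) \<xi>) = Zf i \<omega>"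
proof -
  assume ik: "i \<le> k"
  have "b i \<le> k" "a i \<le> k" using ik ab[of i] bk[of i] by linarith+
  then show ?thesis unfolding Zf_def using X_inv ik by simp
qed

lemma gk_inv: "i < k \<Longrightarrow> gk i (fun_upd \<omega> (idx k) \<xi>) = gk i \<omega>"
  unfolding gk_def using Zf_inv[of i k] inj[of i k] by simp

lemma nz_inv: "i < k \<Longrightarrow> nz i (fun_upd \<omega> (idx k) \<xi>) = nz i \<omega>"
  unfolding nz_def using Zf_inv[of i k] gk_inv[of i k] by simp

lemma gk_upd: "gk k (fun_upd \<omega> (idx k) \<xi>) = G (Zf k \<omega>) \<xi>"
  unfolding gk_def using Zf_inv[of k k] by simp

lemma nz_upd: "nz k (fun_upd \<omega> (idx k) \<xi>) = G (Zf k \<omega>) \<xi> - gf (Zf k \<omega>)"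
  unfolding nz_def using Zf_inv[of k k] gk_upd by simp

lemma X_tele: "a' \<le> b' \<Longrightarrow> X b' \<omega> = X a' \<omega> - \<gamma> *\<^sub>R (\<Sum>i\<in>{a'..<b'}. gk i \<omega>)"
proof (induction b' rule: dec_induct)
  case base then show ?case by simp
next
  case (step b')
  then show ?case using XS'[of b' \<omega>] by (simp add: scaleR_add_right)
qed

lemma XZ: "X k \<omega> - Zf k \<omega> = - \<gamma> *\<^sub>R (\<Sum>i\<in>{a k..<b k}. gk i \<omega>)"
  unfolding Zf_def using X_tele[OF ab[of k], of \<omega>] by simp

end

context cyc_setting
begin

definition "phi k = (\<integral>\<^sup>+\<omega>. ennreal (f (X k \<omega>) - fstar) \<partial>PP)"
definition "nu k = (\<integral>\<^sup>+\<omega>. ennreal ((norm (gf (X k \<omega>)))\<^sup>2) \<partial>PP)"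
definition "mu k = (\<integral>\<^sup>+\<omega>. ennreal ((norm (gf (Zf k \<omega>)))\<^sup>2) \<partial>PP)"
definition "dl k = (\<integral>\<^sup>+\<omega>. ennreal ((norm (gf (X k \<omega>) - gf (Zf k \<omega>)))\<^sup>2) \<partial>PP)"
definition "eta k = (\<integral>\<^sup>+\<omega>. ennreal ((norm (nz k \<omega>))\<^sup>2) \<partial>PP)"
definition "Sn a' b' = (\<integral>\<^sup>+\<omega>. ennreal ((norm (\<Sum>i\<in>{a'..<b'}. nz i \<omega>))\<^sup>2) \<partial>PP)"

lemma fiber:
  assumes h: "h \<in> borel_measurable PP"
    and eq: "\<And>\<omega> \<xi>. h (fun_upd \<omega> m \<xi>) = H \<omega> \<xi>"
  shows "(\<integral>\<^sup>+\<omega>. h \<omega> \<partial>PP) = (\<integral>\<^sup>+\<omega>. (\<integral>\<^sup>+\<xi>. H \<omega> \<xi> \<partial>D) \<partial>PP)"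
    and "(\<lambda>\<omega>. \<integral>\<^sup>+\<xi>. H \<omega> \<xi> \<partial>D) \<in> borel_measurable PP"
proof -
  have e: "(\<lambda>\<omega>. \<integral>\<^sup>+\<xi>. h (fun_upd \<omega> m \<xi>) \<partial>D) = (\<lambda>\<omega>. \<integral>\<^sup>+\<xi>. H \<omega> \<xi> \<partial>D)"
    using eq by simp
  show "(\<integral>\<^sup>+\<omega>. h \<omega> \<partial>PP) = (\<integral>\<^sup>+\<omega>. (\<integral>\<^sup>+\<xi>. H \<omega> \<xi> \<partial>D) \<partial>PP)"
    using resample[OF D h, of m] e by simp
  show "(\<lambda>\<omega>. \<integral>\<^sup>+\<xi>. H \<omega> \<xi> \<partial>D) \<in> borel_measurable PP"
    using resample_meas[OF D h, of m] e by simp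
qed

lemma eta_fiber:
  "eta k = (\<integral>\<^sup>+\<omega>. (\<integral>\<^sup>+\<xi>. ennreal ((norm (G (Zf k \<omega>) \<xi> - gf (Zf k \<omega>)))\<^sup>2) \<partial>D) \<partial>PP)"
  "(\<lambda>\<omega>. \<integral>\<^sup>+\<xi>. ennreal ((norm (G (Zf k \<omega>) \<xi> - gf (Zf k \<omega>)))\<^sup>2) \<partial>D) \<in> borel_measurable PP"
proof -
  have h: "(\<lambda>\<omega>. ennreal ((norm (nz k \<omega>))\<^sup>2)) \<in> borel_measurable PP" by measurable
  have eq: "\<And>\<omega> \<xi>. ennreal ((norm (nz k (fun_upd \<omega> (idx k) \<xi>)))\<^sup>2) = ennreal ((norm (G (Zf k \<omega>) \<xi> - gf (Zf k \<omega>)))\<^sup>2)"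
    using nz_upd by simp
  show "eta k = (\<integral>\<^sup>+\<omega>. (\<integral>\<^sup>+\<xi>. ennreal ((norm (G (Zf k \<omega>) \<xi> - gf (Zf k \<omega>)))\<^sup>2) \<partial>D) \<partial>PP)"
    unfolding eta_def by (rule fiber(1)[OF h eq])
  show "(\<lambda>\<omega>. \<integral>\<^sup>+\<xi>. ennreal ((norm (G (Zf k \<omega>) \<xi> - gf (Zf k \<omega>)))\<^sup>2) \<partial>D) \<in> borel_measurable PP"
    by (rule fiber(2)[OF h eq])
qed

lemma eta_le: "eta k \<le> ennreal (\<sigma>\<^sup>2)"
proof -
  have "eta k \<le> (\<integral>\<^sup>+\<omega>. ennreal (\<sigma>\<^sup>2) \<partial>PP)"
    unfolding eta_fiber(1) by (intro nn_integral_mono F1le[OF D meas unbiased var])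
  also have "\<dots> = ennreal (\<sigma>\<^sup>2)" using PPi.emeasure_space_1 by simp
  finally show ?thesis .
qed

lemma Sn_step:
  assumes "a' \<le> b'"
  shows "Sn a' (Suc b') = Sn a' b' + eta b'"
proof -
  let ?m = "idx b'"
  let ?S = "\<lambda>\<omega>. \<Sum>i\<in>{a'..<b'}. nz i \<omega>"
  have h: "(\<lambda>\<omega>. ennreal ((norm (?S \<omega> + nz b' \<omega>))\<^sup>2)) \<in> borel_measurable PP" by measurable
  have Sinv: "?S (fun_upd \<omega> ?m \<xi>) = ?S \<omega>" for \<omega> \<xi>
    using nz_inv by (intro sum.cong) auto
  have eq: "\<And>\<omega> \<xi>. ennreal ((norm (?S (fun_upd \<omega> ?m \<xi>) + nz b' (fun_upd \<omega> ?m \<xi>)))\<^sup>2)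
      = ennreal ((norm (?S \<omega> + (G (Zf b' \<omega>) \<xi> - gf (Zf b' \<omega>))))\<^sup>2)"
    using Sinv nz_upd by simp
  have "Sn a' (Suc b') = (\<integral>\<^sup>+\<omega>. ennreal ((norm (?S \<omega> + nz b' \<omega>))\<^sup>2) \<partial>PP)"
    unfolding Sn_def using assms by (simp add: sum.atLeastLessThan_Suc)
  also have "\<dots> = (\<integral>\<^sup>+\<omega>. (\<integral>\<^sup>+\<xi>. ennreal ((norm (?S \<omega> + (G (Zf b' \<omega>) \<xi> - gf (Zf b' \<omega>))))\<^sup>2) \<partial>D) \<partial>PP)"
    by (rule fiber(1)[OF h eq])
  also have "\<dots> = (\<integral>\<^sup>+\<omega>. ennreal ((norm (?S \<omega>))\<^sup>2) + (\<integral>\<^sup>+\<xi>. ennreal ((norm (G (Zf b' \<omega>) \<xi> - gf (Zf b' \<omega>)))\<^sup>2) \<partial>D) \<partial>PP)"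
    by (intro nn_integral_cong F2[OF D meas unbiased var])
  also have "\<dots> = Sn a' b' + eta b'"
    unfolding Sn_def eta_fiber(1) using eta_fiber(2) by (intro nn_integral_add) auto
  finally show ?thesis .
qed

lemma Sn_bound:
  assumes "a' \<le> b'"
  shows "Sn a' b' \<le> ennreal (real (b' - a') * \<sigma>\<^sup>2)"
  using assms
proof (induction b' rule: dec_induct)
  case base then show ?case by (simp add: Sn_def)
next
  case (step b')
  have "Sn a' (Suc b') = Sn a' b' + eta b'" using Sn_step[OF step(1)] .
  also have "\<dots> \<le> ennreal (real (b' - a') * \<sigma>\<^sup>2) + ennreal (\<sigma>\<^sup>2)" using step(3) eta_le by (rule add_mono)
  also have "\<dots> = ennreal (real (Suc b' - a') * \<sigma>\<^sup>2)"
  proof -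
    have "real (Suc b' - a') * \<sigma>\<^sup>2 = real (b' - a') * \<sigma>\<^sup>2 + \<sigma>\<^sup>2"
      using step(1) by (simp add: Suc_diff_le algebra_simps)
    then show ?thesis by (simp add: ennreal_plus)
  qed
  finally show ?case .
qed

end

lemma ennreal4: "0 \<le> a \<Longrightarrow> 0 \<le> b \<Longrightarrow> 0 \<le> c \<Longrightarrow> 0 \<le> d \<Longrightarrow>
  ennreal (a + b + c + d) = ennreal a + ennreal b + ennreal c + ennreal d"
  by (simp add: ennreal_plus[symmetric] del: ennreal_plus)

context cyc_setting
begin

lemma step_ineq:
  assumes c0: "0 \<le> c" and d0: "0 \<le> d" and ed: "d < e" and c: "c = e - (e - 1/2)\<^sup>2 / (e - d)"
  shows "phi (Suc k) + ennreal (\<gamma> * c) * nu k + ennreal (\<gamma> * d) * mu k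
     \<le> phi k + ennreal (\<gamma> * e) * dl k + ennreal (L * \<gamma>\<^sup>2 / 2) * mu k + ennreal (L * \<gamma>\<^sup>2 / 2 * \<sigma>\<^sup>2)"
proof -
  have e0: "0 \<le> e" using d0 ed by simp
  have g0: "0 \<le> \<gamma>" using gpos by simp
  have L0: "0 \<le> L" using Lpos by simp
  let ?A = "\<lambda>\<omega>. \<integral>\<^sup>+\<xi>. ennreal (f (X k \<omega> - \<gamma> *\<^sub>R G (Zf k \<omega>) \<xi>) - fstar) \<partial>D"
  let ?N = "\<lambda>\<omega>. (norm (gf (X k \<omega>)))\<^sup>2"
  let ?U = "\<lambda>\<omega>. (norm (gf (Zf k \<omega>)))\<^sup>2"
  let ?Dl = "\<lambda>\<omega>. (norm (gf (X k \<omega>) - gf (Zf k \<omega>)))\<^sup>2"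
  let ?Phi = "\<lambda>\<omega>. f (X k \<omega>) - fstar"
  have h: "(\<lambda>\<omega>. ennreal (f (X (Suc k) \<omega>) - fstar)) \<in> borel_measurable PP" by measurable
  have eq: "\<And>\<omega> \<xi>. ennreal (f (X (Suc k) (fun_upd \<omega> (idx k) \<xi>)) - fstar) = ennreal (f (X k \<omega> - \<gamma> *\<^sub>R G (Zf k \<omega>) \<xi>) - fstar)"
    using XS' X_inv[of k k] gk_upd by simp
  have P1: "phi (Suc k) = (\<integral>\<^sup>+\<omega>. ?A \<omega> \<partial>PP)" unfolding phi_def by (rule fiber(1)[OF h eq])
  have Am: "?A \<in> borel_measurable PP" by (rule fiber(2)[OF h eq])
  have pw: "?A \<omega> + (ennreal (\<gamma> * c) * ennreal (?N \<omega>) + ennreal (\<gamma> * d) * ennreal (?U \<omega>))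
      \<le> ennreal (?Phi \<omega>) + ennreal (\<gamma> * e) * ennreal (?Dl \<omega>) + ennreal (L * \<gamma>\<^sup>2 / 2) * ennreal (?U \<omega>) + ennreal (L * \<gamma>\<^sup>2 / 2 * \<sigma>\<^sup>2)" for \<omega>
  proof -
    have F: "?A \<omega> + ennreal (\<gamma> * c * ?N \<omega> + \<gamma> * d * ?U \<omega>)
       \<le> ennreal (?Phi \<omega> + \<gamma> * e * ?Dl \<omega> + L * \<gamma>\<^sup>2 / 2 * (?U \<omega> + \<sigma>\<^sup>2))"
      by (rule F4[OF grad lip lower D meas unbiased var g0 c0 d0 ed c])
    have l: "ennreal (\<gamma> * c * ?N \<omega> + \<gamma> * d * ?U \<omega>) = ennreal (\<gamma> * c) * ennreal (?N \<omega>) + ennreal (\<gamma> * d) * ennreal (?U \<omega>)"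
      using g0 c0 d0 by (simp add: ennreal_plus ennreal_mult)
    have r: "ennreal (?Phi \<omega> + \<gamma> * e * ?Dl \<omega> + L * \<gamma>\<^sup>2 / 2 * (?U \<omega> + \<sigma>\<^sup>2))
        = ennreal (?Phi \<omega>) + ennreal (\<gamma> * e) * ennreal (?Dl \<omega>) + ennreal (L * \<gamma>\<^sup>2 / 2) * ennreal (?U \<omega>) + ennreal (L * \<gamma>\<^sup>2 / 2 * \<sigma>\<^sup>2)"
    proof -
      have p0: "0 \<le> ?Phi \<omega>" using lower by simp
      have "ennreal (?Phi \<omega> + \<gamma> * e * ?Dl \<omega> + L * \<gamma>\<^sup>2 / 2 * (?U \<omega> + \<sigma>\<^sup>2)) = ennreal (?Phi \<omega> + \<gamma> * e * ?Dl \<omega> + L * \<gamma>\<^sup>2 / 2 * ?U \<omega> + L * \<gamma>\<^sup>2 / 2 * \<sigma>\<^sup>2)"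
        by (simp add: algebra_simps)
      also have "ennreal (?Phi \<omega> + \<gamma> * e * ?Dl \<omega> + L * \<gamma>\<^sup>2 / 2 * ?U \<omega> + L * \<gamma>\<^sup>2 / 2 * \<sigma>\<^sup>2)
        = ennreal (?Phi \<omega>) + ennreal (\<gamma> * e * ?Dl \<omega>) + ennreal (L * \<gamma>\<^sup>2 / 2 * ?U \<omega>) + ennreal (L * \<gamma>\<^sup>2 / 2 * \<sigma>\<^sup>2)"
        using p0 g0 e0 L0 by (intro ennreal4) auto
      also have "ennreal (\<gamma> * e * ?Dl \<omega>) = ennreal (\<gamma> * e) * ennreal (?Dl \<omega>)"
        by (rule ennreal_mult) (use g0 e0 in auto)
      also have "ennreal (L * \<gamma>\<^sup>2 / 2 * ?U \<omega>) = ennreal (L * \<gamma>\<^sup>2 / 2) * ennreal (?U \<omega>)"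
        by (rule ennreal_mult) (use L0 in auto)
      finally show ?thesis .
    qed
    show ?thesis using F unfolding l r .
  qed
  have "phi (Suc k) + ennreal (\<gamma> * c) * nu k + ennreal (\<gamma> * d) * mu k
      = (\<integral>\<^sup>+\<omega>. ?A \<omega> + (ennreal (\<gamma> * c) * ennreal (?N \<omega>) + ennreal (\<gamma> * d) * ennreal (?U \<omega>)) \<partial>PP)"
    unfolding P1 nu_def mu_def using Am
    by (simp add: nn_integral_add nn_integral_cmult add.assoc)
  also have "\<dots> \<le> (\<integral>\<^sup>+\<omega>. ennreal (?Phi \<omega>) + ennreal (\<gamma> * e) * ennreal (?Dl \<omega>) + ennreal (L * \<gamma>\<^sup>2 / 2) * ennreal (?U \<omega>) + ennreal (L * \<gamma>\<^sup>2 / 2 * \<sigma>\<^sup>2) \<partial>PP)"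
    using pw by (rule nn_integral_mono)
  also have "\<dots> = phi k + ennreal (\<gamma> * e) * dl k + ennreal (L * \<gamma>\<^sup>2 / 2) * mu k + ennreal (L * \<gamma>\<^sup>2 / 2 * \<sigma>\<^sup>2)"
    unfolding phi_def dl_def mu_def using PPi.emeasure_space_1
    by (simp add: nn_integral_add nn_integral_cmult)
  finally show ?thesis .
qed

lemma dl_le:
  "dl k \<le> ennreal (2 * L\<^sup>2 * \<gamma>\<^sup>2 * R) * (\<Sum>i\<in>{a k..<b k}. mu i) + ennreal (2 * L\<^sup>2 * \<gamma>\<^sup>2 * R * \<sigma>\<^sup>2)"
proof -
  let ?I = "{a k..<b k}"
  have cI: "real (card ?I) \<le> real R" using abR[of k] bk[of k] by simp
  have pw: "(norm (gf (X k \<omega>) - gf (Zf k \<omega>)))\<^sup>2 \<le>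
      2 * L\<^sup>2 * \<gamma>\<^sup>2 * R * (\<Sum>i\<in>?I. (norm (gf (Zf i \<omega>)))\<^sup>2) + 2 * L\<^sup>2 * \<gamma>\<^sup>2 * (norm (\<Sum>i\<in>?I. nz i \<omega>))\<^sup>2" for \<omega>
  proof -
    have "(norm (gf (X k \<omega>) - gf (Zf k \<omega>)))\<^sup>2 \<le> (L * norm (X k \<omega> - Zf k \<omega>))\<^sup>2"
      using lip[of "X k \<omega>" "Zf k \<omega>"] by (simp add: power_mono)
    also have "\<dots> = L\<^sup>2 * \<gamma>\<^sup>2 * (norm (\<Sum>i\<in>?I. gk i \<omega>))\<^sup>2"
      unfolding XZ using gpos by (simp add: power_mult_distrib)
    also have "(\<Sum>i\<in>?I. gk i \<omega>) = (\<Sum>i\<in>?I. gf (Zf i \<omega>)) + (\<Sum>i\<in>?I. nz i \<omega>)"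
      unfolding nz_def by (simp add: sum.distrib[symmetric])
    also have "L\<^sup>2 * \<gamma>\<^sup>2 * (norm ((\<Sum>i\<in>?I. gf (Zf i \<omega>)) + (\<Sum>i\<in>?I. nz i \<omega>)))\<^sup>2
        \<le> L\<^sup>2 * \<gamma>\<^sup>2 * (2 * (norm (\<Sum>i\<in>?I. gf (Zf i \<omega>)))\<^sup>2 + 2 * (norm (\<Sum>i\<in>?I. nz i \<omega>))\<^sup>2)"
      by (intro mult_left_mono norm_add_sq) auto
    also have "\<dots> \<le> L\<^sup>2 * \<gamma>\<^sup>2 * (2 * (real (card ?I) * (\<Sum>i\<in>?I. (norm (gf (Zf i \<omega>)))\<^sup>2)) + 2 * (norm (\<Sum>i\<in>?I. nz i \<omega>))\<^sup>2)"
      by (intro mult_left_mono add_right_mono norm_sum_sq) auto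
    also have "\<dots> \<le> L\<^sup>2 * \<gamma>\<^sup>2 * (2 * (real R * (\<Sum>i\<in>?I. (norm (gf (Zf i \<omega>)))\<^sup>2)) + 2 * (norm (\<Sum>i\<in>?I. nz i \<omega>))\<^sup>2)"
      using cI by (intro mult_left_mono add_right_mono mult_right_mono sum_nonneg) auto
    finally show ?thesis by (simp add: algebra_simps)
  qed
  have "dl k \<le> (\<integral>\<^sup>+\<omega>. ennreal (2 * L\<^sup>2 * \<gamma>\<^sup>2 * R) * (\<Sum>i\<in>?I. ennreal ((norm (gf (Zf i \<omega>)))\<^sup>2)) + ennreal (2 * L\<^sup>2 * \<gamma>\<^sup>2) * ennreal ((norm (\<Sum>i\<in>?I. nz i \<omega>))\<^sup>2) \<partial>PP)"
    unfolding dl_def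
  proof (intro nn_integral_mono)
    fix \<omega>
    have "ennreal ((norm (gf (X k \<omega>) - gf (Zf k \<omega>)))\<^sup>2) \<le> ennreal (2 * L\<^sup>2 * \<gamma>\<^sup>2 * R * (\<Sum>i\<in>?I. (norm (gf (Zf i \<omega>)))\<^sup>2) + 2 * L\<^sup>2 * \<gamma>\<^sup>2 * (norm (\<Sum>i\<in>?I. nz i \<omega>))\<^sup>2)"
      using pw by (rule ennreal_leI)
    also have "\<dots> = ennreal (2 * L\<^sup>2 * \<gamma>\<^sup>2 * R) * (\<Sum>i\<in>?I. ennreal ((norm (gf (Zf i \<omega>)))\<^sup>2)) + ennreal (2 * L\<^sup>2 * \<gamma>\<^sup>2) * ennreal ((norm (\<Sum>i\<in>?I. nz i \<omega>))\<^sup>2)"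
    proof -
      have s0: "0 \<le> (\<Sum>i\<in>?I. (norm (gf (Zf i \<omega>)))\<^sup>2)" by (simp add: sum_nonneg)
      have "ennreal (2 * L\<^sup>2 * \<gamma>\<^sup>2 * R * (\<Sum>i\<in>?I. (norm (gf (Zf i \<omega>)))\<^sup>2) + 2 * L\<^sup>2 * \<gamma>\<^sup>2 * (norm (\<Sum>i\<in>?I. nz i \<omega>))\<^sup>2)
         = ennreal (2 * L\<^sup>2 * \<gamma>\<^sup>2 * R * (\<Sum>i\<in>?I. (norm (gf (Zf i \<omega>)))\<^sup>2)) + ennreal (2 * L\<^sup>2 * \<gamma>\<^sup>2 * (norm (\<Sum>i\<in>?I. nz i \<omega>))\<^sup>2)"
        using s0 by (intro ennreal_plus) auto
      also have "ennreal (2 * L\<^sup>2 * \<gamma>\<^sup>2 * R * (\<Sum>i\<in>?I. (norm (gf (Zf i \<omega>)))\<^sup>2)) = ennreal (2 * L\<^sup>2 * \<gamma>\<^sup>2 * R) * ennreal (\<Sum>i\<in>?I. (norm (gf (Zf i \<omega>)))\<^sup>2)"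
        using s0 by (intro ennreal_mult) auto
      also have "ennreal (\<Sum>i\<in>?I. (norm (gf (Zf i \<omega>)))\<^sup>2) = (\<Sum>i\<in>?I. ennreal ((norm (gf (Zf i \<omega>)))\<^sup>2))"
        by (rule sum_ennreal[symmetric]) auto
      also have "ennreal (2 * L\<^sup>2 * \<gamma>\<^sup>2 * (norm (\<Sum>i\<in>?I. nz i \<omega>))\<^sup>2) = ennreal (2 * L\<^sup>2 * \<gamma>\<^sup>2) * ennreal ((norm (\<Sum>i\<in>?I. nz i \<omega>))\<^sup>2)"
        by (intro ennreal_mult) auto
      finally show ?thesis .
    qed
    finally show "ennreal ((norm (gf (X k \<omega>) - gf (Zf k \<omega>)))\<^sup>2) \<le> ennreal (2 * L\<^sup>2 * \<gamma>\<^sup>2 * R) * (\<Sum>i\<in>?I. ennreal ((norm (gf (Zf i \<omega>)))\<^sup>2)) + ennreal (2 * L\<^sup>2 * \<gamma>\<^sup>2) * ennreal ((norm (\<Sum>i\<in>?I. nz i \<omega>))\<^sup>2)" .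
  qed
  also have "\<dots> = ennreal (2 * L\<^sup>2 * \<gamma>\<^sup>2 * R) * (\<Sum>i\<in>?I. mu i) + ennreal (2 * L\<^sup>2 * \<gamma>\<^sup>2) * Sn (a k) (b k)"
  proof -
    have m1: "(\<lambda>\<omega>. ennreal (2 * L\<^sup>2 * \<gamma>\<^sup>2 * R) * (\<Sum>i\<in>?I. ennreal ((norm (gf (Zf i \<omega>)))\<^sup>2))) \<in> borel_measurable PP"
      by measurable
    have m2: "(\<lambda>\<omega>. ennreal (2 * L\<^sup>2 * \<gamma>\<^sup>2) * ennreal ((norm (\<Sum>i\<in>?I. nz i \<omega>))\<^sup>2)) \<in> borel_measurable PP"
      by measurable
    have m3: "(\<lambda>\<omega>. (\<Sum>i\<in>?I. ennreal ((norm (gf (Zf i \<omega>)))\<^sup>2))) \<in> borel_measurable PP"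
      by measurable
    have m4: "(\<lambda>\<omega>. ennreal ((norm (\<Sum>i\<in>?I. nz i \<omega>))\<^sup>2)) \<in> borel_measurable PP"
      by measurable
    have "(\<integral>\<^sup>+\<omega>. ennreal (2 * L\<^sup>2 * \<gamma>\<^sup>2 * R) * (\<Sum>i\<in>?I. ennreal ((norm (gf (Zf i \<omega>)))\<^sup>2)) + ennreal (2 * L\<^sup>2 * \<gamma>\<^sup>2) * ennreal ((norm (\<Sum>i\<in>?I. nz i \<omega>))\<^sup>2) \<partial>PP)
       = (\<integral>\<^sup>+\<omega>. ennreal (2 * L\<^sup>2 * \<gamma>\<^sup>2 * R) * (\<Sum>i\<in>?I. ennreal ((norm (gf (Zf i \<omega>)))\<^sup>2)) \<partial>PP)
         + (\<integral>\<^sup>+\<omega>. ennreal (2 * L\<^sup>2 * \<gamma>\<^sup>2) * ennreal ((norm (\<Sum>i\<in>?I. nz i \<omega>))\<^sup>2) \<partial>PP)"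
      by (rule nn_integral_add[OF m1 m2])
    also have "(\<integral>\<^sup>+\<omega>. ennreal (2 * L\<^sup>2 * \<gamma>\<^sup>2 * R) * (\<Sum>i\<in>?I. ennreal ((norm (gf (Zf i \<omega>)))\<^sup>2)) \<partial>PP)
        = ennreal (2 * L\<^sup>2 * \<gamma>\<^sup>2 * R) * (\<integral>\<^sup>+\<omega>. (\<Sum>i\<in>?I. ennreal ((norm (gf (Zf i \<omega>)))\<^sup>2)) \<partial>PP)"
      by (rule nn_integral_cmult[OF m3])
    also have "(\<integral>\<^sup>+\<omega>. (\<Sum>i\<in>?I. ennreal ((norm (gf (Zf i \<omega>)))\<^sup>2)) \<partial>PP) = (\<Sum>i\<in>?I. mu i)"
      unfolding mu_def by (rule nn_integral_sum) measurable
    also have "(\<integral>\<^sup>+\<omega>. ennreal (2 * L\<^sup>2 * \<gamma>\<^sup>2) * ennreal ((norm (\<Sum>i\<in>?I. nz i \<omega>))\<^sup>2) \<partial>PP)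
        = ennreal (2 * L\<^sup>2 * \<gamma>\<^sup>2) * Sn (a k) (b k)"
      unfolding Sn_def by (rule nn_integral_cmult[OF m4])
    finally show ?thesis .
  qed
  also have "\<dots> \<le> ennreal (2 * L\<^sup>2 * \<gamma>\<^sup>2 * R) * (\<Sum>i\<in>?I. mu i) + ennreal (2 * L\<^sup>2 * \<gamma>\<^sup>2) * ennreal (real (b k - a k) * \<sigma>\<^sup>2)"
    using Sn_bound[OF ab[of k]] by (intro add_left_mono mult_left_mono) auto
  also have "ennreal (2 * L\<^sup>2 * \<gamma>\<^sup>2) * ennreal (real (b k - a k) * \<sigma>\<^sup>2) \<le> ennreal (2 * L\<^sup>2 * \<gamma>\<^sup>2 * R * \<sigma>\<^sup>2)"
  proof -
    have "real (b k - a k) \<le> real R" using abR[of k] bk[of k] by simp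
    then have "2 * L\<^sup>2 * \<gamma>\<^sup>2 * (real (b k - a k) * \<sigma>\<^sup>2) \<le> 2 * L\<^sup>2 * \<gamma>\<^sup>2 * R * \<sigma>\<^sup>2"
      by (simp add: mult_right_mono mult_left_mono mult.assoc)
    then show ?thesis by (simp add: ennreal_mult[symmetric] ennreal_leI)
  qed
  finally show ?thesis by (simp add: add_left_mono)
qed

end

context cyc_setting
begin

lemma nu_le: "nu k \<le> ennreal (2 * L) * phi k"
proof -
  have "nu k \<le> (\<integral>\<^sup>+\<omega>. ennreal (2 * L) * ennreal (f (X k \<omega>) - fstar) \<partial>PP)"
    unfolding nu_def
  proof (rule nn_integral_mono)
    fix \<omega>
    have "(norm (gf (X k \<omega>)))\<^sup>2 \<le> 2 * L * (f (X k \<omega>) - fstar)" by (rule grad_bound[OF grad lip lower Lpos])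
    then have "ennreal ((norm (gf (X k \<omega>)))\<^sup>2) \<le> ennreal (2 * L * (f (X k \<omega>) - fstar))" by (rule ennreal_leI)
    also have "\<dots> = ennreal (2 * L) * ennreal (f (X k \<omega>) - fstar)"
      by (rule ennreal_mult) (use Lpos lower in auto)
    finally show "ennreal ((norm (gf (X k \<omega>)))\<^sup>2) \<le> ennreal (2 * L) * ennreal (f (X k \<omega>) - fstar)" .
  qed
  also have "\<dots> = ennreal (2 * L) * phi k" unfolding phi_def by (rule nn_integral_cmult) measurable
  finally show ?thesis .
qed

lemma mu_le: "mu k \<le> 2 * nu k + 2 * dl k"
proof -
  have "mu k \<le> (\<integral>\<^sup>+\<omega>. 2 * ennreal ((norm (gf (X k \<omega>)))\<^sup>2) + 2 * ennreal ((norm (gf (X k \<omega>) - gf (Zf k \<omega>)))\<^sup>2) \<partial>PP)"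
    unfolding mu_def
  proof (rule nn_integral_mono)
    fix \<omega>
    have "(norm (gf (Zf k \<omega>)))\<^sup>2 = (norm (gf (X k \<omega>) + - (gf (X k \<omega>) - gf (Zf k \<omega>))))\<^sup>2" by simp
    also have "\<dots> \<le> 2 * (norm (gf (X k \<omega>)))\<^sup>2 + 2 * (norm (- (gf (X k \<omega>) - gf (Zf k \<omega>))))\<^sup>2" by (rule norm_add_sq)
    finally have "ennreal ((norm (gf (Zf k \<omega>)))\<^sup>2) \<le> ennreal (2 * (norm (gf (X k \<omega>)))\<^sup>2 + 2 * (norm (gf (X k \<omega>) - gf (Zf k \<omega>)))\<^sup>2)"
      by (intro ennreal_leI) (simp add: norm_minus_commute)
    also have "\<dots> = 2 * ennreal ((norm (gf (X k \<omega>)))\<^sup>2) + 2 * ennreal ((norm (gf (X k \<omega>) - gf (Zf k \<omega>)))\<^sup>2)"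
      by (simp add: ennreal_plus ennreal_mult)
    finally show "ennreal ((norm (gf (Zf k \<omega>)))\<^sup>2) \<le> 2 * ennreal ((norm (gf (X k \<omega>)))\<^sup>2) + 2 * ennreal ((norm (gf (X k \<omega>) - gf (Zf k \<omega>)))\<^sup>2)" .
  qed
  also have "\<dots> = 2 * nu k + 2 * dl k"
    unfolding nu_def dl_def by (simp add: nn_integral_add nn_integral_cmult)
  finally show ?thesis .
qed

lemma phi_0: "phi 0 = ennreal (f w0 - fstar)"
  unfolding phi_def X0 using PPi.emeasure_space_1 by simp

lemma phi_Suc_le: "phi (Suc k) \<le> phi k + ennreal (\<gamma> * (1/2)) * dl k + ennreal (L * \<gamma>\<^sup>2 / 2) * mu k + ennreal (L * \<gamma>\<^sup>2 / 2 * \<sigma>\<^sup>2)"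
proof -
  have "phi (Suc k) \<le> phi (Suc k) + ennreal (\<gamma> * (1/2)) * nu k + ennreal (\<gamma> * 0) * mu k" by simp
  also have "\<dots> \<le> phi k + ennreal (\<gamma> * (1/2)) * dl k + ennreal (L * \<gamma>\<^sup>2 / 2) * mu k + ennreal (L * \<gamma>\<^sup>2 / 2 * \<sigma>\<^sup>2)"
    by (rule step_ineq) (auto simp: power2_eq_square)
  finally show ?thesis .
qed

lemma top_helper: "(x::ennreal) \<le> y \<Longrightarrow> y < \<top> \<Longrightarrow> x < \<top>"
  by (rule le_less_trans)

lemma fin_all: "phi k < \<top> \<and> (\<forall>i<k. mu i < \<top>)"
proof (induction k)
  case 0 then show ?case using phi_0 by simp
next
  case (Suc k)
  have pk: "phi k \<noteq> \<top>" using Suc.IH less_imp_neq by blast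
  have nuf: "nu k < \<top>"
    by (rule top_helper[OF nu_le]) (use pk in \<open>simp add: ennreal_mult_less_top top.not_eq_extremum\<close>)
  have s: "(\<Sum>i\<in>{a k..<b k}. mu i) \<noteq> \<top>" using Suc bk[of k] by (simp add: less_top)
  have dlf: "dl k < \<top>"
    by (rule top_helper[OF dl_le]) (use s in \<open>simp add: ennreal_mult_less_top top.not_eq_extremum\<close>)
  have muf: "mu k < \<top>"
    by (rule top_helper[OF mu_le]) (use nuf dlf in \<open>simp add: ennreal_mult_less_top top.not_eq_extremum\<close>)
  have "phi (Suc k) < \<top>"
    by (rule top_helper[OF phi_Suc_le]) (use pk dlf muf in \<open>simp add: ennreal_mult_less_top top.not_eq_extremum\<close>)
  then show ?case using Suc muf less_Suc_eq by auto
qed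

lemma fin: "phi k < \<top>" "mu k < \<top>" "nu k < \<top>" "dl k < \<top>"
proof -
  show p: "phi k < \<top>" using fin_all by blast
  show "mu k < \<top>" using fin_all[of "Suc k"] by blast
  have pk: "phi k \<noteq> \<top>" using p less_imp_neq by blast
  show "nu k < \<top>"
    by (rule top_helper[OF nu_le]) (use pk in \<open>simp add: ennreal_mult_less_top top.not_eq_extremum\<close>)
  have s: "(\<Sum>i\<in>{a k..<b k}. mu i) \<noteq> \<top>" using fin_all[of k] bk[of k] by (simp add: less_top)
  show "dl k < \<top>"
    by (rule top_helper[OF dl_le]) (use s in \<open>simp add: ennreal_mult_less_top top.not_eq_extremum\<close>)
qed

end

lemma double_sum_le:
  fixes \<mu> :: "nat \<Rightarrow> real" and a b :: "nat \<Rightarrow> nat"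
  assumes \<mu>: "\<And>i. 0 \<le> \<mu> i" and bk: "\<And>k. b k \<le> k" and R: "\<And>k. k - a k \<le> R"
  shows "(\<Sum>k<K. \<Sum>i\<in>{a k..<b k}. \<mu> i) \<le> real R * (\<Sum>i<K. \<mu> i)"
proof -
  have "(\<Sum>k<K. \<Sum>i\<in>{a k..<b k}. \<mu> i) = (\<Sum>k<K. \<Sum>i<K. if a k \<le> i \<and> i < b k then \<mu> i else 0)"
  proof (rule sum.cong[OF refl])
    fix k assume "k \<in> {..<K}"
    then have sub: "{a k..<b k} \<subseteq> {..<K}" using bk[of k] by auto
    have "(\<Sum>i<K. if a k \<le> i \<and> i < b k then \<mu> i else 0) = (\<Sum>i\<in>{..<K} \<inter> {i. a k \<le> i \<and> i < b k}. \<mu> i)"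
      by (simp add: sum.inter_restrict)
    also have "{..<K} \<inter> {i. a k \<le> i \<and> i < b k} = {a k..<b k}" using sub by auto
    finally show "(\<Sum>i\<in>{a k..<b k}. \<mu> i) = (\<Sum>i<K. if a k \<le> i \<and> i < b k then \<mu> i else 0)" by simp
  qed
  also have "\<dots> = (\<Sum>i<K. \<Sum>k<K. if a k \<le> i \<and> i < b k then \<mu> i else 0)" by (rule sum.swap)
  also have "\<dots> \<le> (\<Sum>i<K. real R * \<mu> i)"
  proof (rule sum_mono)
    fix i assume "i \<in> {..<K}"
    have "(\<Sum>k<K. if a k \<le> i \<and> i < b k then \<mu> i else 0) = real (card ({..<K} \<inter> {k. a k \<le> i \<and> i < b k})) * \<mu> i"
      by (simp add: sum.If_cases)
    also have "\<dots> \<le> real R * \<mu> i"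
    proof -
      have "{..<K} \<inter> {k. a k \<le> i \<and> i < b k} \<subseteq> {Suc i..i + R}"
      proof
        fix k assume "k \<in> {..<K} \<inter> {k. a k \<le> i \<and> i < b k}"
        then have "a k \<le> i" "i < b k" by auto
        then show "k \<in> {Suc i..i + R}" using bk[of k] R[of k] by auto
      qed
      then have "card ({..<K} \<inter> {k. a k \<le> i \<and> i < b k}) \<le> card {Suc i..i + R}" by (intro card_mono) auto
      then have "card ({..<K} \<inter> {k. a k \<le> i \<and> i < b k}) \<le> R" by simp
      then show ?thesis using \<mu>[of i] by (intro mult_right_mono) auto
    qed
    finally show "(\<Sum>k<K. if a k \<le> i \<and> i < b k then \<mu> i else 0) \<le> real R * \<mu> i" .
  qed
  also have "\<dots> = real R * (\<Sum>i<K. \<mu> i)" by (simp add: sum_distrib_left)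
  finally show ?thesis .
qed

context cyc_setting
begin

definition "pr k = enn2real (phi k)"
definition "nr k = enn2real (nu k)"
definition "mr k = enn2real (mu k)"
definition "dr k = enn2real (dl k)"

lemma real_eqs: "phi k = ennreal (pr k)" "nu k = ennreal (nr k)" "mu k = ennreal (mr k)" "dl k = ennreal (dr k)"
  unfolding pr_def nr_def mr_def dr_def using fin by (auto simp: ennreal_enn2real top.not_eq_extremum)

lemma real_nn: "0 \<le> pr k" "0 \<le> nr k" "0 \<le> mr k" "0 \<le> dr k"
  unfolding pr_def nr_def mr_def dr_def by (auto simp: enn2real_nonneg)

lemma R1:
  assumes c0: "0 \<le> c" and d0: "0 \<le> d" and ed: "d < e" and c: "c = e - (e - 1/2)\<^sup>2 / (e - d)"
  shows "pr (Suc k) + \<gamma> * c * nr k + \<gamma> * d * mr k \<le> pr k + \<gamma> * e * dr k + L * \<gamma>\<^sup>2 / 2 * mr k + L * \<gamma>\<^sup>2 / 2 * \<sigma>\<^sup>2"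
proof -
  have g0: "0 \<le> \<gamma>" using gpos by simp
  have e0: "0 \<le> e" using ed d0 by simp
  have L0: "0 \<le> L" using Lpos by simp
  note nn = real_nn[of k] real_nn[of "Suc k"]
  have S: "phi (Suc k) + ennreal (\<gamma> * c) * nu k + ennreal (\<gamma> * d) * mu k
     \<le> phi k + ennreal (\<gamma> * e) * dl k + ennreal (L * \<gamma>\<^sup>2 / 2) * mu k + ennreal (L * \<gamma>\<^sup>2 / 2 * \<sigma>\<^sup>2)"
    by (rule step_ineq[OF c0 d0 ed c])
  have l: "phi (Suc k) + ennreal (\<gamma> * c) * nu k + ennreal (\<gamma> * d) * mu k = ennreal (pr (Suc k) + \<gamma> * c * nr k + \<gamma> * d * mr k)"
    unfolding real_eqs using nn g0 c0 d0 by (simp add: ennreal_plus ennreal_mult)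
  have r: "phi k + ennreal (\<gamma> * e) * dl k + ennreal (L * \<gamma>\<^sup>2 / 2) * mu k + ennreal (L * \<gamma>\<^sup>2 / 2 * \<sigma>\<^sup>2)
      = ennreal (pr k + \<gamma> * e * dr k + L * \<gamma>\<^sup>2 / 2 * mr k + L * \<gamma>\<^sup>2 / 2 * \<sigma>\<^sup>2)"
  proof -
    have "ennreal (pr k + \<gamma> * e * dr k + L * \<gamma>\<^sup>2 / 2 * mr k + L * \<gamma>\<^sup>2 / 2 * \<sigma>\<^sup>2)
      = ennreal (pr k) + ennreal (\<gamma> * e * dr k) + ennreal (L * \<gamma>\<^sup>2 / 2 * mr k) + ennreal (L * \<gamma>\<^sup>2 / 2 * \<sigma>\<^sup>2)"
      using nn g0 e0 L0 by (intro ennreal4) auto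
    also have "ennreal (\<gamma> * e * dr k) = ennreal (\<gamma> * e) * ennreal (dr k)"
      by (rule ennreal_mult) (use nn g0 e0 in auto)
    also have "ennreal (L * \<gamma>\<^sup>2 / 2 * mr k) = ennreal (L * \<gamma>\<^sup>2 / 2) * ennreal (mr k)"
      by (rule ennreal_mult) (use nn L0 in auto)
    finally show ?thesis unfolding real_eqs by simp
  qed
  have rn: "0 \<le> pr k + \<gamma> * e * dr k + L * \<gamma>\<^sup>2 / 2 * mr k + L * \<gamma>\<^sup>2 / 2 * \<sigma>\<^sup>2"
    using nn g0 e0 L0 by simp
  show ?thesis using S unfolding l r using rn by (simp add: ennreal_le_iff)
qed

lemma R2: "dr k \<le> 2 * L\<^sup>2 * \<gamma>\<^sup>2 * R * (\<Sum>i\<in>{a k..<b k}. mr i) + 2 * L\<^sup>2 * \<gamma>\<^sup>2 * R * \<sigma>\<^sup>2"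
proof -
  have S: "dl k \<le> ennreal (2 * L\<^sup>2 * \<gamma>\<^sup>2 * R) * (\<Sum>i\<in>{a k..<b k}. mu i) + ennreal (2 * L\<^sup>2 * \<gamma>\<^sup>2 * R * \<sigma>\<^sup>2)"
    by (rule dl_le)
  have s0: "0 \<le> (\<Sum>i\<in>{a k..<b k}. mr i)" using real_nn by (simp add: sum_nonneg)
  have "(\<Sum>i\<in>{a k..<b k}. mu i) = ennreal (\<Sum>i\<in>{a k..<b k}. mr i)"
    unfolding real_eqs using real_nn by simp
  then have r: "ennreal (2 * L\<^sup>2 * \<gamma>\<^sup>2 * R) * (\<Sum>i\<in>{a k..<b k}. mu i) + ennreal (2 * L\<^sup>2 * \<gamma>\<^sup>2 * R * \<sigma>\<^sup>2)
     = ennreal (2 * L\<^sup>2 * \<gamma>\<^sup>2 * R * (\<Sum>i\<in>{a k..<b k}. mr i) + 2 * L\<^sup>2 * \<gamma>\<^sup>2 * R * \<sigma>\<^sup>2)"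
    using s0 by (simp add: ennreal_plus ennreal_mult)
  have rn: "0 \<le> 2 * L\<^sup>2 * \<gamma>\<^sup>2 * R * (\<Sum>i\<in>{a k..<b k}. mr i) + 2 * L\<^sup>2 * \<gamma>\<^sup>2 * R * \<sigma>\<^sup>2" using s0 by simp
  show ?thesis using S unfolding r real_eqs(4) using rn by (simp add: ennreal_le_iff)
qed

end

context cyc_setting
begin

lemma pr_0: "pr 0 = f w0 - fstar"
  unfolding pr_def phi_0 using lower[of w0] by simp

lemma sum_bound:
  assumes c0: "0 \<le> c" and d0: "0 \<le> d" and ed: "d < e" and c: "c = e - (e - 1/2)\<^sup>2 / (e - d)"
    and dcond: "2 * e * \<gamma>\<^sup>2 * L\<^sup>2 * (real R)\<^sup>2 + L * \<gamma> / 2 \<le> d"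
  shows "\<gamma> * c * (\<Sum>k<K. nr k) \<le> (f w0 - fstar) + real K * (2 * e * \<gamma>^3 * L\<^sup>2 * R * \<sigma>\<^sup>2 + L * \<gamma>\<^sup>2 * \<sigma>\<^sup>2 / 2)"
proof -
  have g0: "0 \<le> \<gamma>" using gpos by simp
  have e0: "0 \<le> e" using ed d0 by simp
  have L0: "0 \<le> L" using Lpos by simp
  define P where "P = (\<Sum>k<K. pr (Suc k))"
  define P0 where "P0 = (\<Sum>k<K. pr k)"
  define N where "N = (\<Sum>k<K. nr k)"
  define M where "M = (\<Sum>k<K. mr k)"
  define Dd where "Dd = (\<Sum>k<K. dr k)"
  define DD where "DD = (\<Sum>k<K. \<Sum>i\<in>{a k..<b k}. mr i)"
  have M0: "0 \<le> M" unfolding M_def using real_nn by (simp add: sum_nonneg)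
  have i: "P + \<gamma> * c * N + \<gamma> * d * M \<le> P0 + \<gamma> * e * Dd + L * \<gamma>\<^sup>2 / 2 * M + real K * (L * \<gamma>\<^sup>2 / 2 * \<sigma>\<^sup>2)"
  proof -
    have "(\<Sum>k<K. pr (Suc k) + \<gamma> * c * nr k + \<gamma> * d * mr k) \<le> (\<Sum>k<K. pr k + \<gamma> * e * dr k + L * \<gamma>\<^sup>2 / 2 * mr k + L * \<gamma>\<^sup>2 / 2 * \<sigma>\<^sup>2)"
      by (rule sum_mono) (rule R1[OF c0 d0 ed c])
    then show ?thesis unfolding P_def P0_def N_def M_def Dd_def
      by (simp add: sum.distrib sum_distrib_left)
  qed
  have ii: "Dd \<le> 2 * L\<^sup>2 * \<gamma>\<^sup>2 * R * DD + real K * (2 * L\<^sup>2 * \<gamma>\<^sup>2 * R * \<sigma>\<^sup>2)"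
  proof -
    have "Dd \<le> (\<Sum>k<K. 2 * L\<^sup>2 * \<gamma>\<^sup>2 * R * (\<Sum>i\<in>{a k..<b k}. mr i) + 2 * L\<^sup>2 * \<gamma>\<^sup>2 * R * \<sigma>\<^sup>2)"
      unfolding Dd_def by (rule sum_mono) (rule R2)
    then show ?thesis unfolding DD_def by (simp add: sum.distrib sum_distrib_left)
  qed
  have iii: "DD \<le> real R * M"
    unfolding DD_def M_def by (rule double_sum_le) (use real_nn bk abR in auto)
  have iv: "P - P0 = pr K - pr 0"
    unfolding P_def P0_def by (simp add: sum_lessThan_telescope sum_subtractf[symmetric])
  have pK: "0 \<le> pr K" using real_nn by simp
  have A1: "\<gamma> * e * Dd \<le> \<gamma> * e * (2 * L\<^sup>2 * \<gamma>\<^sup>2 * R * (real R * M) + real K * (2 * L\<^sup>2 * \<gamma>\<^sup>2 * R * \<sigma>\<^sup>2))"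
  proof -
    have "Dd \<le> 2 * L\<^sup>2 * \<gamma>\<^sup>2 * R * (real R * M) + real K * (2 * L\<^sup>2 * \<gamma>\<^sup>2 * R * \<sigma>\<^sup>2)"
      using ii iii by (smt (verit, best) mult_left_mono zero_le_power2 mult_nonneg_nonneg of_nat_0_le_iff)
    then show ?thesis using g0 e0 by (intro mult_left_mono) auto
  qed
  have A2: "(2 * e * \<gamma>\<^sup>2 * L\<^sup>2 * (real R)\<^sup>2 + L * \<gamma> / 2) * (\<gamma> * M) \<le> d * (\<gamma> * M)"
    using dcond g0 M0 by (intro mult_right_mono) auto
  have E1: "\<gamma> * e * (2 * L\<^sup>2 * \<gamma>\<^sup>2 * R * (real R * M) + real K * (2 * L\<^sup>2 * \<gamma>\<^sup>2 * R * \<sigma>\<^sup>2))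
      = (2 * e * \<gamma>\<^sup>2 * L\<^sup>2 * (real R)\<^sup>2) * (\<gamma> * M) + real K * (2 * e * \<gamma>^3 * L\<^sup>2 * R * \<sigma>\<^sup>2)"
    by (simp add: algebra_simps power2_eq_square power3_eq_cube)
  have E2: "L * \<gamma>\<^sup>2 / 2 * M = (L * \<gamma> / 2) * (\<gamma> * M)" by (simp add: power2_eq_square)
  have E3: "(2 * e * \<gamma>\<^sup>2 * L\<^sup>2 * (real R)\<^sup>2 + L * \<gamma> / 2) * (\<gamma> * M) = (2 * e * \<gamma>\<^sup>2 * L\<^sup>2 * (real R)\<^sup>2) * (\<gamma> * M) + (L * \<gamma> / 2) * (\<gamma> * M)"
    by (simp add: algebra_simps)
  have E4: "\<gamma> * d * M = d * (\<gamma> * M)" by simp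
  have E5: "real K * (L * \<gamma>\<^sup>2 / 2 * \<sigma>\<^sup>2) + real K * (2 * e * \<gamma>^3 * L\<^sup>2 * R * \<sigma>\<^sup>2) = real K * (2 * e * \<gamma>^3 * L\<^sup>2 * R * \<sigma>\<^sup>2 + L * \<gamma>\<^sup>2 * \<sigma>\<^sup>2 / 2)"
    by (simp add: algebra_simps)
  have "\<gamma> * c * N \<le> pr 0 + real K * (2 * e * \<gamma>^3 * L\<^sup>2 * R * \<sigma>\<^sup>2 + L * \<gamma>\<^sup>2 * \<sigma>\<^sup>2 / 2)"
    using i A1 A2 E1 E2 E3 E4 E5 iv pK by linarith
  then show ?thesis unfolding N_def pr_0 .
qed

end

lemma c_closed:
  fixes u :: real
  assumes u0: "0 < u" and u1: "u \<le> 1"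
  shows "1/(2*u) - (1/(2*u) - 1/2)\<^sup>2 / (1/(2*u) - 3*u/8) = (8 - 7*u) / (2 * (4 - 3*u\<^sup>2))"
    and "3*u/8 < 1/(2*u)"
proof -
  have uu: "u\<^sup>2 \<le> 1" using u0 u1 by (simp add: power_le_one)
  have q: "4 - 3*u\<^sup>2 > 0" using uu by linarith
  have "1/(2*u) - 3*u/8 = (4 - 3*u\<^sup>2) / (8*u)" using u0 by (simp add: field_simps power2_eq_square)
  moreover have "(1/(2*u) - 1/2)\<^sup>2 = (1 - u)\<^sup>2 / (4*u\<^sup>2)" using u0 by (simp add: field_simps power2_eq_square)
  ultimately have "1/(2*u) - (1/(2*u) - 1/2)\<^sup>2 / (1/(2*u) - 3*u/8) = 1/(2*u) - (1 - u)\<^sup>2 / (4*u\<^sup>2) * (8*u) / (4 - 3*u\<^sup>2)"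
    by simp
  also have "\<dots> = (8 - 7*u) / (2 * (4 - 3*u\<^sup>2))"
    using u0 q by (simp add: field_simps power2_eq_square)
  finally show "1/(2*u) - (1/(2*u) - 1/2)\<^sup>2 / (1/(2*u) - 3*u/8) = (8 - 7*u) / (2 * (4 - 3*u\<^sup>2))" .
  show "3*u/8 < 1/(2*u)" using u0 q by (simp add: field_simps power2_eq_square)
qed

lemma c_bound:
  fixes u v :: real
  assumes u0: "0 < u" and u1: "u \<le> 1" and v0: "0 \<le> v" and v1: "v \<le> 1" and uv: "u = 1 \<or> v = 1"
  shows "1 / (2 * (u + v)) + v / 4 \<le> (8 - 7*u) / (2 * (4 - 3*u\<^sup>2))" and "0 \<le> (8 - 7*u) / (2 * (4 - 3*u\<^sup>2))"
proof -
  have uu: "u\<^sup>2 \<le> 1" using u0 u1 by (simp add: power_le_one)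
  have q: "4 - 3*u\<^sup>2 > 0" using uu by linarith
  show "0 \<le> (8 - 7*u) / (2 * (4 - 3*u\<^sup>2))" using q u1 by simp
  from uv show "1 / (2 * (u + v)) + v / 4 \<le> (8 - 7*u) / (2 * (4 - 3*u\<^sup>2))"
  proof
    assume u: "u = 1"
    have "1 / (2 * (1 + v)) + v / 4 \<le> 1/2"
    proof -
      have "1 / (2 * (1 + v)) + v / 4 = (2 + v * (1 + v)) / (4 * (1 + v))" using v0 by (simp add: field_simps)
      also have "\<dots> \<le> 1/2"
      proof -
        have "v * v \<le> v" using v0 v1 by (simp add: mult_left_le_one_le)
        then have "2 + v * (1 + v) \<le> 1/2 * (4 * (1 + v))" by (simp add: algebra_simps)
        then show ?thesis using v0 by (simp add: divide_simps)
      qed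
      finally show ?thesis .
    qed
    then show ?thesis using u by simp
  next
    assume v: "v = 1"
    have "1 / (2 * (u + 1)) + 1 / 4 = (u + 3) / (4 * (u + 1))" using u0 by (simp add: field_simps)
    also have "\<dots> \<le> (8 - 7*u) / (2 * (4 - 3*u\<^sup>2))"
    proof -
      have "(u + 3) * (2 * (4 - 3*u\<^sup>2)) \<le> (8 - 7*u) * (4 * (u + 1))"
      proof -
        have "(8 - 7*u) * (4 * (u + 1)) - (u + 3) * (2 * (4 - 3*u\<^sup>2)) = 2 * ((u - 1) * (3*u\<^sup>2 - 2*u - 4))"
          by (simp add: algebra_simps power2_eq_square power3_eq_cube)
        moreover have "(u - 1) * (3*u\<^sup>2 - 2*u - 4) \<ge> 0"
        proof -
          have "u - 1 \<le> 0" using u1 by simp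
          moreover have "3*u\<^sup>2 - 2*u - 4 \<le> 0" using u0 uu by linarith
          ultimately show ?thesis by (simp add: mult_nonpos_nonpos)
        qed
        ultimately show ?thesis by linarith
      qed
      then show ?thesis using u0 q by (simp add: divide_simps)
    qed
    finally show ?thesis using v by simp
  qed
qed

lemma stepsize_props:
  fixes n s :: nat and L \<sigma> \<epsilon> :: real
  assumes n: "1 \<le> n" and s: "1 \<le> s" "s \<le> n" and L: "0 < L" and eps: "0 < \<epsilon>"
  defines "\<gamma> \<equiv> cycle_stepsize n s L \<sigma> \<epsilon>"
  shows "0 < \<gamma>" "\<gamma> * (4 * real n ^ 2 * L / real s) \<le> 1" "\<gamma> * (4 * \<sigma>\<^sup>2 * L / \<epsilon>) \<le> 1"
    "\<gamma> * (4 * real n ^ 2 * L / real s) = 1 \<or> \<gamma> * (4 * \<sigma>\<^sup>2 * L / \<epsilon>) = 1"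
    "\<sigma>\<^sup>2 = 0 \<longrightarrow> \<gamma> * (4 * real n ^ 2 * L / real s) = 1"
proof -
  have A: "0 < 4 * real n ^ 2 * L / real s" using n s L by simp
  let ?a = "real s / (4 * real n ^ 2 * L)"
  let ?b = "\<epsilon> / (4 * \<sigma>\<^sup>2 * L)"
  have a0: "0 < ?a" using n s L by simp
  have ea: "?a * (4 * real n ^ 2 * L / real s) = 1" using n s L by (simp add: field_simps)
  show "\<sigma>\<^sup>2 = 0 \<longrightarrow> \<gamma> * (4 * real n ^ 2 * L / real s) = 1"
    unfolding \<gamma>_def cycle_stepsize_def using ea by simp
  have all: "0 < \<gamma> \<and> \<gamma> * (4 * real n ^ 2 * L / real s) \<le> 1 \<and> \<gamma> * (4 * \<sigma>\<^sup>2 * L / \<epsilon>) \<le> 1 \<and>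
    (\<gamma> * (4 * real n ^ 2 * L / real s) = 1 \<or> \<gamma> * (4 * \<sigma>\<^sup>2 * L / \<epsilon>) = 1)"
  proof (cases "\<sigma>\<^sup>2 = 0")
    case True
    then show ?thesis unfolding \<gamma>_def cycle_stepsize_def using ea a0 by simp
  next
    case False
    then have sp: "\<sigma>\<^sup>2 > 0" by (simp add: less_le)
    have b0: "0 < ?b" using sp L eps by simp
    have eb: "?b * (4 * \<sigma>\<^sup>2 * L / \<epsilon>) = 1" using sp L eps by (simp add: field_simps)
    have B: "0 < 4 * \<sigma>\<^sup>2 * L / \<epsilon>" using sp L eps by simp
    have g: "\<gamma> = min ?a ?b" unfolding \<gamma>_def cycle_stepsize_def using False by simp
    show ?thesis
    proof (cases "?a \<le> ?b")
      case True
      then have "\<gamma> = ?a" using g by simp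
      moreover have "?a * (4 * \<sigma>\<^sup>2 * L / \<epsilon>) \<le> ?b * (4 * \<sigma>\<^sup>2 * L / \<epsilon>)"
        by (rule mult_right_mono[OF True]) (use B in simp)
      ultimately show ?thesis using ea eb a0 by simp
    next
      case False
      then have "\<gamma> = ?b" using g by simp
      moreover have "?b * (4 * real n ^ 2 * L / real s) \<le> ?a * (4 * real n ^ 2 * L / real s)"
        by (rule mult_right_mono) (use False A in simp_all)
      ultimately show ?thesis using ea eb b0 by simp
    qed
  qed
  then show "0 < \<gamma>" "\<gamma> * (4 * real n ^ 2 * L / real s) \<le> 1" "\<gamma> * (4 * \<sigma>\<^sup>2 * L / \<epsilon>) \<le> 1"
    "\<gamma> * (4 * real n ^ 2 * L / real s) = 1 \<or> \<gamma> * (4 * \<sigma>\<^sup>2 * L / \<epsilon>) = 1" by blast+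
qed

theorem theoremE5:
  fixes f :: "'a::euclidean_space \<Rightarrow> real" and gf :: "'a \<Rightarrow> 'a"
    and G :: "'a \<Rightarrow> 'b \<Rightarrow> 'a" and D :: "'b measure"
    and L \<sigma> fstar \<epsilon> :: real and n s K :: nat and w0 :: 'a
  assumes grad: "\<And>x. (f has_derivative (\<lambda>h. gf x \<bullet> h)) (at x)"
    and lip: "\<And>x y. norm (gf x - gf y) \<le> L * norm (x - y)"
    and lower: "\<And>x. fstar \<le> f x"
    and D: "prob_space D"
    and meas: "(\<lambda>(x, \<xi>). G x \<xi>) \<in> borel_measurable (borel \<Otimes>\<^sub>M D)"
    and unbiased: "\<And>x. integrable D (G x) \<and> (\<integral>\<xi>. G x \<xi> \<partial>D) = gf x"
    and var: "\<And>x. integrable D (\<lambda>\<xi>. (norm (G x \<xi> - gf x))\<^sup>2)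
                   \<and> (\<integral>\<xi>. (norm (G x \<xi> - gf x))\<^sup>2 \<partial>D) \<le> \<sigma>\<^sup>2"
    and n: "1 \<le> n" and s: "1 \<le> s" "s \<le> n"
    and eps: "\<epsilon> > 0"
    and K: "real K \<ge> 8 * real n ^ 2 * L * (f w0 - fstar) / (real s * \<epsilon>)
                     + 8 * \<sigma>\<^sup>2 * L * (f w0 - fstar) / \<epsilon>\<^sup>2"
  shows "(\<Sum>k<K. \<integral>\<^sup>+ \<omega>. ennreal ((norm (gf (main_branch (cycle_stepsize n s L \<sigma> \<epsilon>) G n s w0 \<omega> k)))\<^sup>2)
                 \<partial>(PiM UNIV (\<lambda>_::nat. D)))
           / ennreal (real K) \<le> ennreal \<epsilon>"
proof -
  have L0: "0 \<le> L" using L_nonneg[OF lip] .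
  show ?thesis
  proof (cases "L = 0")
    case True
    have gz: "gf x = 0" for x
    proof (rule ccontr)
      assume "gf x \<noteq> 0"
      then have N: "(norm (gf x))\<^sup>2 > 0" by simp
      define Phi where "Phi = f x - fstar"
      have P0: "0 \<le> Phi" using lower[of x] by (simp add: Phi_def)
      define L' where "L' = (norm (gf x))\<^sup>2 / (4 * (Phi + 1))"
      have L'p: "0 < L'" using N P0 by (simp add: L'_def)
      have lip': "norm (gf y - gf z) \<le> L' * norm (y - z)" for y z
      proof -
        have "norm (gf y - gf z) \<le> 0" using lip[of y z] True by simp
        also have "0 \<le> L' * norm (y - z)" using L'p by simp
        finally show ?thesis .
      qed
      have "(norm (gf x))\<^sup>2 \<le> 2 * L' * Phi" unfolding Phi_def by (rule grad_bound[OF grad lip' lower L'p])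
      also have "\<dots> = (norm (gf x))\<^sup>2 * (Phi / (2 * (Phi + 1)))" using P0 by (simp add: L'_def field_simps)
      also have "\<dots> < (norm (gf x))\<^sup>2 * 1"
      proof -
        have "Phi / (2 * (Phi + 1)) < 1" using P0 by (simp add: field_simps)
        then show ?thesis using N by (intro mult_strict_left_mono) auto
      qed
      finally show False by simp
    qed
    then show ?thesis by simp
  next
    case False
    then have Lp: "0 < L" using L0 by simp
    define \<gamma> where "\<gamma> = cycle_stepsize n s L \<sigma> \<epsilon>"
    define R where "R = num_groups n s * n"
    have sp: "0 < \<gamma>" "\<gamma> * (4 * real n ^ 2 * L / real s) \<le> 1" "\<gamma> * (4 * \<sigma>\<^sup>2 * L / \<epsilon>) \<le> 1"
      "\<gamma> * (4 * real n ^ 2 * L / real s) = 1 \<or> \<gamma> * (4 * \<sigma>\<^sup>2 * L / \<epsilon>) = 1"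
      using stepsize_props[OF n s Lp eps] unfolding \<gamma>_def by blast+
    have t1: "\<And>k. aa n s k \<le> bb n s k" by (rule tag_props(1)[OF n s(1)])
    have t2: "\<And>k. bb n s k \<le> k" by (rule tag_props(2)[OF n s(1)])
    have t3: "\<And>k. k - aa n s k \<le> R" unfolding R_def using tag_props(3)[OF n s(1)] by (simp add: less_imp_le)
    have t4: "\<And>j k. j < k \<Longrightarrow> mm n s j \<noteq> mm n s k" by (rule mm_inj[OF n s(1)])
    have t5: "\<And>\<omega>. main_branch \<gamma> G n s w0 \<omega> 0 = w0" by simp
    have t6: "\<And>k \<omega>. main_branch \<gamma> G n s w0 \<omega> (Suc k) = main_branch \<gamma> G n s w0 \<omega> k - \<gamma> *\<^sub>R G (main_branch \<gamma> G n s w0 \<omega> k - main_branch \<gamma> G n s w0 \<omega> (bb n s k) + main_branch \<gamma> G n s w0 \<omega> (aa n s k)) (\<omega> (mm n s k))"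
      by (rule mb_rec[OF n s(1)])
    interpret CS: cyc_setting f gf G D \<sigma> L fstar \<gamma> "aa n s" "bb n s" "mm n s" R "\<lambda>k \<omega>. main_branch \<gamma> G n s w0 \<omega> k" w0
      by (rule cyc_setting.intro[where X = "\<lambda>k \<omega>. main_branch \<gamma> G n s w0 \<omega> k", OF grad lip lower D meas unbiased var sp(1) Lp t1 t2 t3 t4 t5 t6])
    define u where "u = \<gamma> * (4 * real n ^ 2 * L / real s)"
    define v where "v = \<gamma> * (4 * \<sigma>\<^sup>2 * L / \<epsilon>)"
    define e where "e = 1 / (2 * u)"
    define d where "d = 3 * u / 8"
    define c where "c = e - (e - 1/2)\<^sup>2 / (e - d)"
    define \<Delta> where "\<Delta> = f w0 - fstar"
    define S where "S = (\<Sum>k<K. CS.nr k)"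
    have np: "0 < real n" "0 < real s" using n s by auto
    have u0: "0 < u" unfolding u_def using sp(1) np Lp by simp
    have u1: "u \<le> 1" unfolding u_def using sp(2) .
    have v0: "0 \<le> v" unfolding v_def using sp(1) Lp eps by simp
    have v1: "v \<le> 1" unfolding v_def using sp(3) .
    have uv: "u = 1 \<or> v = 1" unfolding u_def v_def using sp(4) .
    have cc: "c = (8 - 7*u) / (2 * (4 - 3*u\<^sup>2))" and de: "d < e"
      unfolding c_def e_def d_def using c_closed[OF u0 u1] by simp_all
    have cb: "1 / (2 * (u + v)) + v / 4 \<le> c" and c0: "0 \<le> c"
      unfolding cc using c_bound[OF u0 u1 v0 v1 uv] by simp_all
    have d0: "0 \<le> d" unfolding d_def using u0 by simp
    have D0: "0 \<le> \<Delta>" unfolding \<Delta>_def using lower[of w0] by simp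
    have S0: "0 \<le> S" unfolding S_def using CS.real_nn by (simp add: sum_nonneg)
    have Rs: "real R * real s \<le> 2 * real n ^ 2"
    proof -
      have "num_groups n s * s < n + s" by (rule ng_bounds(1)[OF s(1)])
      then have "num_groups n s * s \<le> 2 * n" using s(2) by linarith
      then have "n * (num_groups n s * s) \<le> n * (2 * n)" by (rule mult_le_mono2)
      then have "R * s \<le> 2 * n ^ 2" unfolding R_def by (simp add: power2_eq_square algebra_simps)
      then have "real (R * s) \<le> real (2 * n ^ 2)" by (simp only: of_nat_le_iff)
      then show ?thesis by simp
    qed
    have rho: "\<gamma> * L * R \<le> u / 2"
    proof -
      have "real R \<le> 2 * real n ^ 2 / real s" using Rs np by (simp add: field_simps)
      then have "\<gamma> * L * R \<le> \<gamma> * L * (2 * real n ^ 2 / real s)" using sp(1) Lp by (intro mult_left_mono) auto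
      also have "\<dots> = u / 2" unfolding u_def by (simp add: field_simps)
      finally show ?thesis .
    qed
    have th: "\<gamma> * L \<le> u / 4"
    proof -
      have "s \<le> n * n" using s(2) n by (metis le_trans mult_le_mono2 mult_1_right)
      then have "real s \<le> real n ^ 2" by (simp add: power2_eq_square flip: of_nat_mult)
      then have "1 \<le> real n ^ 2 / real s" using np by simp
      then have "\<gamma> * L * 1 \<le> \<gamma> * L * (real n ^ 2 / real s)" using sp(1) Lp by (intro mult_left_mono) auto
      also have "\<dots> = u / 4" unfolding u_def by (simp add: field_simps)
      finally show ?thesis by simp
    qed
    have rho0: "0 \<le> \<gamma> * L * R" using sp(1) Lp by simp
    have ratio: "2 * e * (\<gamma> * L * R) \<le> 1/2"
    proof -
      have "2 * e * (\<gamma> * L * R) = (\<gamma> * L * R) / u" unfolding e_def using u0 by simp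
      also have "\<dots> \<le> (u/2) / u" using rho u0 by (intro divide_right_mono) auto
      also have "\<dots> = 1/2" using u0 by simp
      finally show ?thesis .
    qed
    have dcond: "2 * e * \<gamma>\<^sup>2 * L\<^sup>2 * (real R)\<^sup>2 + L * \<gamma> / 2 \<le> d"
    proof -
      have "2 * e * \<gamma>\<^sup>2 * L\<^sup>2 * (real R)\<^sup>2 = (2 * e * (\<gamma> * L * R)) * (\<gamma> * L * R)" by (simp add: power2_eq_square algebra_simps)
      also have "\<dots> \<le> (1/2) * (u/2)" using ratio rho rho0 by (intro mult_mono) auto
      finally have "2 * e * \<gamma>\<^sup>2 * L\<^sup>2 * (real R)\<^sup>2 \<le> u / 4" by simp
      then show ?thesis unfolding d_def using th by (simp add: algebra_simps)
    qed
    have SB: "\<gamma> * c * S \<le> \<Delta> + real K * (2 * e * \<gamma>^3 * L\<^sup>2 * R * \<sigma>\<^sup>2 + L * \<gamma>\<^sup>2 * \<sigma>\<^sup>2 / 2)"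
      unfolding S_def \<Delta>_def by (rule CS.sum_bound[OF c0 d0 de c_def dcond])
    have br: "2 * e * \<gamma>^3 * L\<^sup>2 * R * \<sigma>\<^sup>2 + L * \<gamma>\<^sup>2 * \<sigma>\<^sup>2 / 2 \<le> \<gamma> * (v * \<epsilon> / 4)"
    proof -
      have gls: "\<gamma> * L * \<sigma>\<^sup>2 = v * \<epsilon> / 4" unfolding v_def using eps by (simp add: field_simps)
      have gls0: "0 \<le> \<gamma> * L * \<sigma>\<^sup>2" using sp(1) Lp by simp
      have "2 * e * \<gamma>^3 * L\<^sup>2 * R * \<sigma>\<^sup>2 = (2 * e * (\<gamma> * L * R)) * (\<gamma> * (\<gamma> * L * \<sigma>\<^sup>2))"
        by (simp add: power2_eq_square power3_eq_cube algebra_simps)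
      also have "\<dots> \<le> (1/2) * (\<gamma> * (\<gamma> * L * \<sigma>\<^sup>2))" using ratio gls0 sp(1) by (intro mult_right_mono) auto
      finally have "2 * e * \<gamma>^3 * L\<^sup>2 * R * \<sigma>\<^sup>2 \<le> (1/2) * (\<gamma> * (\<gamma> * L * \<sigma>\<^sup>2))" .
      moreover have "L * \<gamma>\<^sup>2 * \<sigma>\<^sup>2 / 2 = (1/2) * (\<gamma> * (\<gamma> * L * \<sigma>\<^sup>2))" by (simp add: power2_eq_square algebra_simps)
      ultimately show ?thesis unfolding gls[symmetric] by linarith
    qed
    have Kb: "2 * \<Delta> * (u + v) \<le> \<epsilon> * \<gamma> * real K"
    proof -
      have "\<epsilon> * \<gamma> * (8 * real n ^ 2 * L * \<Delta> / (real s * \<epsilon>) + 8 * \<sigma>\<^sup>2 * L * \<Delta> / \<epsilon>\<^sup>2) \<le> \<epsilon> * \<gamma> * real K"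
        using K sp(1) eps unfolding \<Delta>_def by (intro mult_left_mono) auto
      moreover have "\<epsilon> * \<gamma> * (8 * real n ^ 2 * L * \<Delta> / (real s * \<epsilon>) + 8 * \<sigma>\<^sup>2 * L * \<Delta> / \<epsilon>\<^sup>2) = 2 * \<Delta> * (u + v)"
        unfolding u_def v_def using eps np by (simp add: field_simps power2_eq_square)
      ultimately show ?thesis by simp
    qed
    have SK: "S \<le> real K * \<epsilon>"
    proof -
      have uvp: "0 < u + v" using u0 v0 by simp
      have "0 < 1 / (2 * (u + v))" using uvp by simp
      then have cp: "0 < c" using cb v0 by linarith
      have "\<Delta> \<le> \<epsilon> * \<gamma> * real K * (1 / (2 * (u + v)))" using Kb uvp by (simp add: field_simps)
      moreover have "real K * (2 * e * \<gamma>^3 * L\<^sup>2 * R * \<sigma>\<^sup>2 + L * \<gamma>\<^sup>2 * \<sigma>\<^sup>2 / 2) \<le> real K * (\<gamma> * (v * \<epsilon> / 4))"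
        using br by (intro mult_left_mono) auto
      ultimately have "\<gamma> * c * S \<le> \<epsilon> * \<gamma> * real K * (1 / (2 * (u + v))) + real K * (\<gamma> * (v * \<epsilon> / 4))"
        using SB by linarith
      also have "\<dots> = \<gamma> * real K * \<epsilon> * (1 / (2 * (u + v)) + v / 4)" by (simp add: algebra_simps)
      also have "\<dots> \<le> \<gamma> * real K * \<epsilon> * c" using cb sp(1) eps by (intro mult_left_mono) auto
      finally have "\<gamma> * c * S \<le> \<gamma> * c * (real K * \<epsilon>)" by (simp add: algebra_simps)
      then show ?thesis using sp(1) cp by simp
    qed
    have nu_eq: "(\<integral>\<^sup>+ \<omega>. ennreal ((norm (gf (main_branch \<gamma> G n s w0 \<omega> k)))\<^sup>2) \<partial>(PiM UNIV (\<lambda>_::nat. D)))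
        = ennreal (CS.nr k)" for k
    proof -
      have "CS.nu k = (\<integral>\<^sup>+ \<omega>. ennreal ((norm (gf (main_branch \<gamma> G n s w0 \<omega> k)))\<^sup>2) \<partial>(PiM UNIV (\<lambda>_::nat. D)))"
        by (rule CS.nu_def)
      then show ?thesis using CS.real_eqs(2)[of k] by simp
    qed
    have sum_eq: "(\<Sum>k<K. \<integral>\<^sup>+ \<omega>. ennreal ((norm (gf (main_branch \<gamma> G n s w0 \<omega> k)))\<^sup>2) \<partial>(PiM UNIV (\<lambda>_::nat. D)))
        = ennreal S"
      unfolding nu_eq S_def using CS.real_nn by simp
    have final: "(\<Sum>k<K. \<integral>\<^sup>+ \<omega>. ennreal ((norm (gf (main_branch \<gamma> G n s w0 \<omega> k)))\<^sup>2) \<partial>(PiM UNIV (\<lambda>_::nat. D)))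
           / ennreal (real K) \<le> ennreal \<epsilon>"
    proof (cases "K = 0")
      case True then show ?thesis by simp
    next
      case False
      then have Kp: "0 < real K" by simp
      have "ennreal S / ennreal (real K) = ennreal (S / real K)" using S0 Kp by (rule divide_ennreal)
      also have "\<dots> \<le> ennreal \<epsilon>" using SK Kp by (intro ennreal_leI) (simp add: field_simps)
      finally show ?thesis unfolding sum_eq .
    qed
    then show ?thesis unfolding \<gamma>_def .
  qed
qed

end
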